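(* Let $R$ be a commutative Noetherian ring with unity, $\lambda$ a length function on $R$-modules, $S=R[x_1,\dots,x_k]$, $A$ an $S$-module and $\bar A=(A_i)_{i\in\mathbb{N}}$ a $\lambda$-inert filtration of $A$. Then there is a polynomial $\tilde q_{\bar A}(t)\in\mathbb{R}[t]$ of degree at most $k-1$ such that $\lambda(\tilde A_n)=\tilde q_{\bar A}(n)$ for all sufficiently large $n\in\mathbb{N}$.
   Context: A length function on $R$-modules is a function $\lambda$ from $R$-modules to $\mathbb{R}_{\ge0}\cup\{\infty\}$ with $\lambda(0)=0$, invariant under isomorphism, additive on short exact sequences, and with $\lambda(N)=\sup\{\lambda(N'):N'\le N$ finitely generated$\}$. A filtration of $A$ is an increasing sequence of $R$-submodules $A_0\le A_1\le\dots$ with $\bigcup A_i=A$ and $x_jA_i\subseteq A_{i+1}$ for all $i,j$. Put $\tilde A_i=A_{i+1}/A_i$ and let $\tilde{\mathcal B}(\bar A)=\bigoplus_{i\in\mathbb{N}}\tilde A_i$, the graded $S$-module in which each $x_j$ acts with degree $1$ (induced maps $\tilde A_i\to\tilde A_{i+1}$). The filtration is $\lambda$-inert if $\tilde{\mathcal B}(\bar A)$ is a Noetherian $S$-module and there is $n_0$ with $\lambda(\tilde A_n)<\infty$ for all $n\ge n_0$. *)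

theory Defs
  imports "HOL-Algebra.Module" "HOL-Algebra.AbelCoset" "HOL-Algebra.Ring_Divisibility"
    "HOL-Computational_Algebra.Polynomial" "HOL-Library.Extended_Nonnegative_Real"
begin

definition mod_hom :: "'r ring \<Rightarrow> ('r,'a) module \<Rightarrow> ('r,'b) module \<Rightarrow> ('a \<Rightarrow> 'b) \<Rightarrow> bool" where
  "mod_hom R M N f \<longleftrightarrow> f \<in> carrier M \<rightarrow> carrier N
     \<and> (\<forall>x\<in>carrier M. \<forall>y\<in>carrier M. f (x \<oplus>\<^bsub>M\<^esub> y) = f x \<oplus>\<^bsub>N\<^esub> f y)
     \<and> (\<forall>a\<in>carrier R. \<forall>x\<in>carrier M. f (a \<odot>\<^bsub>M\<^esub> x) = a \<odot>\<^bsub>N\<^esub> f x)"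

definition mod_iso :: "'r ring \<Rightarrow> ('r,'a) module \<Rightarrow> ('r,'b) module \<Rightarrow> bool" where
  "mod_iso R M N \<longleftrightarrow> (\<exists>f. mod_hom R M N f \<and> bij_betw f (carrier M) (carrier N))"

definition short_exact :: "'r ring \<Rightarrow> ('r,'a) module \<Rightarrow> ('r,'b) module \<Rightarrow> ('r,'c) module
    \<Rightarrow> ('a \<Rightarrow> 'b) \<Rightarrow> ('b \<Rightarrow> 'c) \<Rightarrow> bool" where
  "short_exact R L M N f g \<longleftrightarrow> mod_hom R L M f \<and> mod_hom R M N g
     \<and> inj_on f (carrier L) \<and> g ` carrier M = carrier N
     \<and> f ` carrier L = {x \<in> carrier M. g x = \<zero>\<^bsub>N\<^esub>}"

definition submod_span :: "'r ring \<Rightarrow> ('r,'a) module \<Rightarrow> 'a set \<Rightarrow> 'a set" where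
  "submod_span R M F = \<Inter>{H. submodule H R M \<and> F \<subseteq> H}"

definition fg_submodule :: "'r ring \<Rightarrow> ('r,'a) module \<Rightarrow> 'a set \<Rightarrow> bool" where
  "fg_submodule R M H \<longleftrightarrow> submodule H R M \<and> (\<exists>F. finite F \<and> F \<subseteq> H \<and> H = submod_span R M F)"

definition length_function :: "'r ring \<Rightarrow> (('r,'u) module \<Rightarrow> ennreal) \<Rightarrow> bool" where
  "length_function R lam \<longleftrightarrow>
     (\<forall>M. module R M \<and> carrier M = {\<zero>\<^bsub>M\<^esub>} \<longrightarrow> lam M = 0)
   \<and> (\<forall>M N. module R M \<and> module R N \<and> mod_iso R M N \<longrightarrow> lam M = lam N)
   \<and> (\<forall>L M N f g. module R L \<and> module R M \<and> module R N \<and> short_exact R L M N f g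
        \<longrightarrow> lam M = lam L + lam N)
   \<and> (\<forall>M. module R M \<longrightarrow> lam M = (SUP H\<in>{H. fg_submodule R M H}. lam (M\<lparr>carrier := H\<rparr>)))"

section \<open>Modules over S = R[x_0,...,x_(k-1)]: R-modules with k commuting R-endomorphisms\<close>

definition smodule :: "'r ring \<Rightarrow> ('r,'a) module \<Rightarrow> nat \<Rightarrow> (nat \<Rightarrow> 'a \<Rightarrow> 'a) \<Rightarrow> bool" where
  "smodule R M k X \<longleftrightarrow> module R M \<and> (\<forall>j<k. mod_hom R M M (X j))
     \<and> (\<forall>i<k. \<forall>j<k. \<forall>x\<in>carrier M. X i (X j x) = X j (X i x))"

definition s_submodule :: "'r ring \<Rightarrow> ('r,'a) module \<Rightarrow> nat \<Rightarrow> (nat \<Rightarrow> 'a \<Rightarrow> 'a) \<Rightarrow> 'a set \<Rightarrow> bool" where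
  "s_submodule R M k X H \<longleftrightarrow> submodule H R M \<and> (\<forall>j<k. X j ` H \<subseteq> H)"

definition s_span :: "'r ring \<Rightarrow> ('r,'a) module \<Rightarrow> nat \<Rightarrow> (nat \<Rightarrow> 'a \<Rightarrow> 'a) \<Rightarrow> 'a set \<Rightarrow> 'a set" where
  "s_span R M k X F = \<Inter>{H. s_submodule R M k X H \<and> F \<subseteq> H}"

definition noetherian_smodule :: "'r ring \<Rightarrow> ('r,'a) module \<Rightarrow> nat \<Rightarrow> (nat \<Rightarrow> 'a \<Rightarrow> 'a) \<Rightarrow> bool" where
  "noetherian_smodule R M k X \<longleftrightarrow> smodule R M k X \<and>
     (\<forall>H. s_submodule R M k X H \<longrightarrow> (\<exists>F. finite F \<and> F \<subseteq> H \<and> H = s_span R M k X F))"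

definition quot_module :: "('r,'a) module \<Rightarrow> 'a set \<Rightarrow> ('r, 'a set) module" where
  "quot_module M N =
     \<lparr>carrier = a_rcosets\<^bsub>M\<^esub> N, mult = (\<lambda>_ _. N), one = N, zero = N,
      add = set_add M, module.smult = (\<lambda>a C. N <+>\<^bsub>M\<^esub> ((\<lambda>x. a \<odot>\<^bsub>M\<^esub> x) ` C))\<rparr>"

definition filtration :: "'r ring \<Rightarrow> ('r,'a) module \<Rightarrow> nat \<Rightarrow> (nat \<Rightarrow> 'a \<Rightarrow> 'a) \<Rightarrow> (nat \<Rightarrow> 'a set) \<Rightarrow> bool" where
  "filtration R A k X Af \<longleftrightarrow> (\<forall>i. submodule (Af i) R A) \<and> (\<forall>i. Af i \<subseteq> Af (Suc i))
     \<and> (\<Union>i. Af i) = carrier A \<and> (\<forall>i. \<forall>j<k. X j ` Af i \<subseteq> Af (Suc i))"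

definition gr_piece :: "('r,'a) module \<Rightarrow> (nat \<Rightarrow> 'a set) \<Rightarrow> nat \<Rightarrow> ('r, 'a set) module" where
  "gr_piece A Af i = quot_module (A\<lparr>carrier := Af (Suc i)\<rparr>) (Af i)"

text \<open>The direct sum of all the pieces (finitely supported sequences).\<close>
definition assoc_graded :: "('r,'a) module \<Rightarrow> (nat \<Rightarrow> 'a set) \<Rightarrow> ('r, nat \<Rightarrow> 'a set) module" where
  "assoc_graded A Af =
     \<lparr>carrier = {b. (\<forall>i. b i \<in> carrier (gr_piece A Af i)) \<and> finite {i. b i \<noteq> Af i}},
      mult = (\<lambda>_ _. Af), one = Af, zero = Af,
      add = (\<lambda>b c i. b i <+>\<^bsub>A\<^esub> c i),
      module.smult = (\<lambda>a b i. a \<odot>\<^bsub>gr_piece A Af i\<^esub> b i)\<rparr>"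

text \<open>Induced degree-one action of x_j: A_(i+1)/A_i -> A_(i+2)/A_(i+1).\<close>
definition assoc_graded_X :: "('r,'a) module \<Rightarrow> (nat \<Rightarrow> 'a set) \<Rightarrow> (nat \<Rightarrow> 'a \<Rightarrow> 'a)
    \<Rightarrow> nat \<Rightarrow> (nat \<Rightarrow> 'a set) \<Rightarrow> (nat \<Rightarrow> 'a set)" where
  "assoc_graded_X A Af X j b i =
     (case i of 0 \<Rightarrow> Af 0 | Suc i' \<Rightarrow> Af i <+>\<^bsub>A\<^esub> (X j ` b i'))"

definition lambda_inert :: "'r ring \<Rightarrow> (('r,'a set) module \<Rightarrow> ennreal) \<Rightarrow> ('r,'a) module
    \<Rightarrow> nat \<Rightarrow> (nat \<Rightarrow> 'a \<Rightarrow> 'a) \<Rightarrow> (nat \<Rightarrow> 'a set) \<Rightarrow> bool" where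
  "lambda_inert R lam A k X Af \<longleftrightarrow> filtration R A k X Af
     \<and> noetherian_smodule R (assoc_graded A Af) k (assoc_graded_X A Af X)
     \<and> (\<exists>n0. \<forall>n\<ge>n0. lam (gr_piece A Af n) < \<infinity>)"

end

theory Submission
  imports Defs "HOL-Computational_Algebra.Polynomial"
begin


definition Qt :: "('r,'a) module \<Rightarrow> 'a set \<Rightarrow> 'a set \<Rightarrow> ('r,'a set) module" where
  "Qt M P N = quot_module (M\<lparr>carrier := P\<rparr>) N"

lemma a_r_coset_upd[simp]: "a_r_coset (M\<lparr>carrier := P\<rparr>) = a_r_coset M"
  by (intro ext) (simp add: a_r_coset_def')

lemma set_add_upd[simp]: "set_add (M\<lparr>carrier := P\<rparr>) = set_add M"
  by (intro ext) (simp add: set_add_def')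

lemma carrier_Qt: "carrier (Qt M P N) = (\<lambda>a. N +>\<^bsub>M\<^esub> a) ` P"
  by (auto simp: Qt_def quot_module_def A_RCOSETS_def')

lemma zero_Qt[simp]: "zero (Qt M P N) = N"
  by (simp add: Qt_def quot_module_def)

lemma add_Qt: "C \<oplus>\<^bsub>Qt M P N\<^esub> D = C <+>\<^bsub>M\<^esub> D"
  by (simp add: Qt_def quot_module_def)

lemma smult_Qt: "r \<odot>\<^bsub>Qt M P N\<^esub> C = N <+>\<^bsub>M\<^esub> ((\<lambda>x. r \<odot>\<^bsub>M\<^esub> x) ` C)"
  by (simp add: Qt_def quot_module_def)

locale modl = module R M for R :: "'r ring" and M :: "('r,'a) module"

context modl begin

lemma coset_mem: "x \<in> N +>\<^bsub>M\<^esub> a \<longleftrightarrow> (\<exists>h\<in>N. x = h \<oplus>\<^bsub>M\<^esub> a)"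
  by (auto simp: a_r_coset_def')

lemma setadd_mem: "x \<in> C <+>\<^bsub>M\<^esub> D \<longleftrightarrow> (\<exists>c\<in>C. \<exists>d\<in>D. x = c \<oplus>\<^bsub>M\<^esub> d)"
  by (auto simp: set_add_def')

lemma submodule_sm:
  assumes "H \<subseteq> carrier M" "\<zero>\<^bsub>M\<^esub> \<in> H"
    "\<And>a b. a\<in>H \<Longrightarrow> b\<in>H \<Longrightarrow> a \<oplus>\<^bsub>M\<^esub> b \<in> H"
    "\<And>r a. r \<in> carrier R \<Longrightarrow> a \<in> H \<Longrightarrow> r \<odot>\<^bsub>M\<^esub> a \<in> H"
  shows "submodule H R M"
proof (rule submoduleI)
  fix a assume a: "a \<in> H"
  then have "a \<in> carrier M" using assms(1) by auto
  then have "\<ominus>\<^bsub>M\<^esub> a = (\<ominus>\<^bsub>R\<^esub> \<one>\<^bsub>R\<^esub>) \<odot>\<^bsub>M\<^esub> a" using smult_l_minus[of "\<one>\<^bsub>R\<^esub>" a] by simp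
  then show "\<ominus>\<^bsub>M\<^esub> a \<in> H" using assms(4) a by simp
qed (use assms in auto)

lemma sub_props:
  assumes "submodule H R M"
  shows "H \<subseteq> carrier M" "\<zero>\<^bsub>M\<^esub> \<in> H"
    "\<And>a b. a\<in>H \<Longrightarrow> b\<in>H \<Longrightarrow> a \<oplus>\<^bsub>M\<^esub> b \<in> H"
    "\<And>r a. r \<in> carrier R \<Longrightarrow> a \<in> H \<Longrightarrow> r \<odot>\<^bsub>M\<^esub> a \<in> H"
    "\<And>a. a \<in> H \<Longrightarrow> \<ominus>\<^bsub>M\<^esub> a \<in> H"
  using submoduleE[OF assms] subgroup.one_closed[OF submodule.axioms(1)[OF assms]] by auto

lemma coset_eq_iff:
  assumes N: "submodule N R M" and a: "a \<in> carrier M" and b: "b \<in> carrier M"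
  shows "N +>\<^bsub>M\<^esub> a = N +>\<^bsub>M\<^esub> b \<longleftrightarrow> a \<ominus>\<^bsub>M\<^esub> b \<in> N"
proof
  assume eq: "N +>\<^bsub>M\<^esub> a = N +>\<^bsub>M\<^esub> b"
  have "a \<in> N +>\<^bsub>M\<^esub> a" using a sub_props[OF N] by (auto simp: coset_mem intro!: bexI[of _ "\<zero>\<^bsub>M\<^esub>"])
  then obtain h where h: "h \<in> N" "a = h \<oplus>\<^bsub>M\<^esub> b" using eq by (auto simp: coset_mem)
  have "h \<in> carrier M" using h sub_props[OF N] by auto
  then have "a \<ominus>\<^bsub>M\<^esub> b = h" using h b by (simp add: a_minus_def M.a_assoc M.r_neg)
  then show "a \<ominus>\<^bsub>M\<^esub> b \<in> N" using h by simp
next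
  assume d: "a \<ominus>\<^bsub>M\<^esub> b \<in> N"
  have dc: "\<ominus>\<^bsub>M\<^esub> (a \<ominus>\<^bsub>M\<^esub> b) \<in> N" using d sub_props[OF N] by auto
  show "N +>\<^bsub>M\<^esub> a = N +>\<^bsub>M\<^esub> b"
  proof (auto simp: coset_mem)
    fix h assume h: "h \<in> N"
    have hc: "h \<in> carrier M" using h sub_props[OF N] by auto
    have "h \<oplus>\<^bsub>M\<^esub> a = (h \<oplus>\<^bsub>M\<^esub> (a \<ominus>\<^bsub>M\<^esub> b)) \<oplus>\<^bsub>M\<^esub> b"
      using a b hc by (simp add: a_minus_def M.a_assoc M.l_neg)
    moreover have "h \<oplus>\<^bsub>M\<^esub> (a \<ominus>\<^bsub>M\<^esub> b) \<in> N" using h d sub_props[OF N] by auto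
    ultimately show "\<exists>h'\<in>N. h \<oplus>\<^bsub>M\<^esub> a = h' \<oplus>\<^bsub>M\<^esub> b" by blast
  next
    fix h assume h: "h \<in> N"
    have hc: "h \<in> carrier M" using h sub_props[OF N] by auto
    have e1: "\<ominus>\<^bsub>M\<^esub> (a \<ominus>\<^bsub>M\<^esub> b) = \<ominus>\<^bsub>M\<^esub> a \<oplus>\<^bsub>M\<^esub> b"
      using a b by (simp add: a_minus_def M.minus_add M.minus_minus M.a_comm)
    have e2: "(h \<oplus>\<^bsub>M\<^esub> (\<ominus>\<^bsub>M\<^esub> a \<oplus>\<^bsub>M\<^esub> b)) \<oplus>\<^bsub>M\<^esub> a = (h \<oplus>\<^bsub>M\<^esub> b) \<oplus>\<^bsub>M\<^esub> (\<ominus>\<^bsub>M\<^esub> a \<oplus>\<^bsub>M\<^esub> a)"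
      using a b hc by (simp add: M.a_ac)
    have "h \<oplus>\<^bsub>M\<^esub> b = (h \<oplus>\<^bsub>M\<^esub> \<ominus>\<^bsub>M\<^esub> (a \<ominus>\<^bsub>M\<^esub> b)) \<oplus>\<^bsub>M\<^esub> a"
      unfolding e1 e2 using a b hc by (simp add: M.l_neg)
    moreover have "h \<oplus>\<^bsub>M\<^esub> \<ominus>\<^bsub>M\<^esub> (a \<ominus>\<^bsub>M\<^esub> b) \<in> N" using h dc sub_props[OF N] by auto
    ultimately show "\<exists>h'\<in>N. h \<oplus>\<^bsub>M\<^esub> b = h' \<oplus>\<^bsub>M\<^esub> a" by blast
  qed
qed

lemma coset_zero_iff:
  assumes N: "submodule N R M" and a: "a \<in> carrier M"
  shows "N +>\<^bsub>M\<^esub> a = N \<longleftrightarrow> a \<in> N"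
proof -
  have "N +>\<^bsub>M\<^esub> \<zero>\<^bsub>M\<^esub> = N" using sub_props[OF N] by (auto simp: coset_mem)
  moreover have "a \<ominus>\<^bsub>M\<^esub> \<zero>\<^bsub>M\<^esub> = a" using a by (simp add: a_minus_def)
  ultimately show ?thesis using coset_eq_iff[OF N a, of "\<zero>\<^bsub>M\<^esub>"] a by simp
qed

lemma coset_sum:
  assumes N: "submodule N R M" and a: "a \<in> carrier M" and b: "b \<in> carrier M"
  shows "(N +>\<^bsub>M\<^esub> a) <+>\<^bsub>M\<^esub> (N +>\<^bsub>M\<^esub> b) = N +>\<^bsub>M\<^esub> (a \<oplus>\<^bsub>M\<^esub> b)"
proof (intro Set.set_eqI iffI)
  fix x assume "x \<in> (N +>\<^bsub>M\<^esub> a) <+>\<^bsub>M\<^esub> (N +>\<^bsub>M\<^esub> b)"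
  then obtain h1 h2 where h: "h1 \<in> N" "h2 \<in> N" and x: "x = (h1 \<oplus>\<^bsub>M\<^esub> a) \<oplus>\<^bsub>M\<^esub> (h2 \<oplus>\<^bsub>M\<^esub> b)"
    by (auto simp: coset_mem setadd_mem)
  then have "h1 \<in> carrier M" "h2 \<in> carrier M" using sub_props[OF N] by auto
  then have "x = (h1 \<oplus>\<^bsub>M\<^esub> h2) \<oplus>\<^bsub>M\<^esub> (a \<oplus>\<^bsub>M\<^esub> b)"
    using a b x by (simp add: M.a_ac)
  moreover have "h1 \<oplus>\<^bsub>M\<^esub> h2 \<in> N" using h sub_props[OF N] by auto
  ultimately show "x \<in> N +>\<^bsub>M\<^esub> (a \<oplus>\<^bsub>M\<^esub> b)" by (auto simp: coset_mem)
next
  fix x assume "x \<in> N +>\<^bsub>M\<^esub> (a \<oplus>\<^bsub>M\<^esub> b)"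
  then obtain h where h: "h \<in> N" and x: "x = h \<oplus>\<^bsub>M\<^esub> (a \<oplus>\<^bsub>M\<^esub> b)" by (auto simp: coset_mem)
  then have "h \<in> carrier M" using sub_props[OF N] by auto
  then have e: "x = (h \<oplus>\<^bsub>M\<^esub> a) \<oplus>\<^bsub>M\<^esub> (\<zero>\<^bsub>M\<^esub> \<oplus>\<^bsub>M\<^esub> b)"
    using a b x by (simp add: M.a_ac)
  have z: "\<zero>\<^bsub>M\<^esub> \<in> N" using sub_props[OF N] by auto
  have "h \<oplus>\<^bsub>M\<^esub> a \<in> N +>\<^bsub>M\<^esub> a" "\<zero>\<^bsub>M\<^esub> \<oplus>\<^bsub>M\<^esub> b \<in> N +>\<^bsub>M\<^esub> b"
    using h z by (auto simp: coset_mem)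
  then show "x \<in> (N +>\<^bsub>M\<^esub> a) <+>\<^bsub>M\<^esub> (N +>\<^bsub>M\<^esub> b)" using e by (auto simp: setadd_mem)
qed

lemma coset_image:
  assumes fc: "f \<in> carrier M \<rightarrow> carrier M"
    and fadd: "\<And>x y. x \<in> carrier M \<Longrightarrow> y \<in> carrier M \<Longrightarrow> f (x \<oplus>\<^bsub>M\<^esub> y) = f x \<oplus>\<^bsub>M\<^esub> f y"
    and N: "submodule N R M" and N': "submodule N' R M" and fN: "f ` N \<subseteq> N'"
    and a: "a \<in> carrier M"
  shows "N' <+>\<^bsub>M\<^esub> (f ` (N +>\<^bsub>M\<^esub> a)) = N' +>\<^bsub>M\<^esub> f a"
proof (intro Set.set_eqI iffI)
  fix x assume "x \<in> N' <+>\<^bsub>M\<^esub> (f ` (N +>\<^bsub>M\<^esub> a))"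
  then obtain n h where nh: "n \<in> N'" "h \<in> N" and x: "x = n \<oplus>\<^bsub>M\<^esub> f (h \<oplus>\<^bsub>M\<^esub> a)"
    by (auto simp: coset_mem setadd_mem)
  have hc: "h \<in> carrier M" "n \<in> carrier M" using nh sub_props[OF N] sub_props[OF N'] by auto
  have fh: "f h \<in> N'" using fN nh by auto
  then have fhc: "f h \<in> carrier M" using sub_props[OF N'] by auto
  have fa: "f a \<in> carrier M" using fc a by auto
  have "x = (n \<oplus>\<^bsub>M\<^esub> f h) \<oplus>\<^bsub>M\<^esub> f a" using x fadd[OF hc(1) a] hc fhc fa by (simp add: M.a_assoc)
  moreover have "n \<oplus>\<^bsub>M\<^esub> f h \<in> N'" using nh fh sub_props[OF N'] by auto
  ultimately show "x \<in> N' +>\<^bsub>M\<^esub> f a" by (auto simp: coset_mem)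
next
  fix x assume "x \<in> N' +>\<^bsub>M\<^esub> f a"
  then obtain n where n: "n \<in> N'" and x: "x = n \<oplus>\<^bsub>M\<^esub> f a" by (auto simp: coset_mem)
  have z: "\<zero>\<^bsub>M\<^esub> \<in> N" using sub_props[OF N] by auto
  have "\<zero>\<^bsub>M\<^esub> \<oplus>\<^bsub>M\<^esub> a \<in> N +>\<^bsub>M\<^esub> a" using z by (auto simp: coset_mem)
  moreover have "\<zero>\<^bsub>M\<^esub> \<oplus>\<^bsub>M\<^esub> a = a" using a by simp
  ultimately have "f a \<in> f ` (N +>\<^bsub>M\<^esub> a)" by (metis imageI)
  then show "x \<in> N' <+>\<^bsub>M\<^esub> (f ` (N +>\<^bsub>M\<^esub> a))" unfolding setadd_mem using n x by (intro bexI[OF _ n] bexI[of _ "f a"]) auto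
qed

lemma smult_Qt_coset:
  assumes N: "submodule N R M" and r: "r \<in> carrier R" and a: "a \<in> carrier M"
  shows "r \<odot>\<^bsub>Qt M P N\<^esub> (N +>\<^bsub>M\<^esub> a) = N +>\<^bsub>M\<^esub> (r \<odot>\<^bsub>M\<^esub> a)"
  unfolding smult_Qt
  by (rule coset_image[OF _ _ N N]) (use r a sub_props[OF N] in \<open>auto simp: smult_r_distr\<close>)

lemma add_Qt_coset:
  assumes N: "submodule N R M" and a: "a \<in> carrier M" and b: "b \<in> carrier M"
  shows "(N +>\<^bsub>M\<^esub> a) \<oplus>\<^bsub>Qt M P N\<^esub> (N +>\<^bsub>M\<^esub> b) = N +>\<^bsub>M\<^esub> (a \<oplus>\<^bsub>M\<^esub> b)"
  unfolding add_Qt by (rule coset_sum[OF N a b])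

lemma coset_zero:
  assumes N: "submodule N R M"
  shows "N +>\<^bsub>M\<^esub> \<zero>\<^bsub>M\<^esub> = N"
  using coset_zero_iff[OF N] sub_props[OF N] by auto

lemma module_transport:
  fixes Q (structure)
  assumes P: "submodule P R M" and surj: "\<phi> ` P = carrier Q"
   and add: "\<And>a b. a\<in>P \<Longrightarrow> b\<in>P \<Longrightarrow> \<phi> (a \<oplus>\<^bsub>M\<^esub> b) = \<phi> a \<oplus>\<^bsub>Q\<^esub> \<phi> b"
   and sm: "\<And>r a. r\<in>carrier R \<Longrightarrow> a\<in>P \<Longrightarrow> \<phi> (r \<odot>\<^bsub>M\<^esub> a) = r \<odot>\<^bsub>Q\<^esub> \<phi> a"
   and z: "\<phi> \<zero>\<^bsub>M\<^esub> = \<zero>\<^bsub>Q\<^esub>"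
  shows "module R Q"
proof -
  note Pp = sub_props[OF P]
  have rep: "\<exists>a\<in>P. x = \<phi> a" if "x \<in> carrier Q" for x using that surj by auto
  have inQ: "\<phi> a \<in> carrier Q" if "a \<in> P" for a using that surj by auto
  have PM: "a \<in> carrier M" if "a \<in> P" for a using that Pp(1) by auto
  have Padd: "a \<oplus>\<^bsub>M\<^esub> b \<in> P" if "a \<in> P" "b \<in> P" for a b using that Pp(3) by blast
  have Psm: "r \<odot>\<^bsub>M\<^esub> a \<in> P" if "r \<in> carrier R" "a \<in> P" for r a using that Pp(4) by blast
  have Pneg: "\<ominus>\<^bsub>M\<^esub> a \<in> P" if "a \<in> P" for a using that Pp(5) by blast
  have P0: "\<zero>\<^bsub>M\<^esub> \<in> P" using Pp(2) .
  show ?thesis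
  proof (rule moduleI)
    show "cring R" by (rule is_cring)
    show "abelian_group Q"
    proof (rule abelian_groupI)
      fix x y assume "x \<in> carrier Q" "y \<in> carrier Q"
      then obtain a b where ab: "a\<in>P" "b\<in>P" "x = \<phi> a" "y = \<phi> b" using rep by blast
      have "x \<oplus>\<^bsub>Q\<^esub> y = \<phi> (a \<oplus>\<^bsub>M\<^esub> b)" using add[OF ab(1,2)] ab(3,4) by simp
      then show "x \<oplus>\<^bsub>Q\<^esub> y \<in> carrier Q" using inQ[OF Padd[OF ab(1,2)]] by simp
    next
      show "\<zero>\<^bsub>Q\<^esub> \<in> carrier Q" using inQ[OF P0] z by simp
    next
      fix x y w assume "x \<in> carrier Q" "y \<in> carrier Q" "w \<in> carrier Q"
      then obtain a b c where abc: "a\<in>P" "b\<in>P" "c\<in>P" "x = \<phi> a" "y = \<phi> b" "w = \<phi> c" using rep by metis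
      have "x \<oplus>\<^bsub>Q\<^esub> y \<oplus>\<^bsub>Q\<^esub> w = \<phi> (a \<oplus>\<^bsub>M\<^esub> b \<oplus>\<^bsub>M\<^esub> c)"
        using add[OF abc(1,2)] add[OF Padd[OF abc(1,2)] abc(3)] abc(4-6) by simp
      also have "\<dots> = \<phi> (a \<oplus>\<^bsub>M\<^esub> (b \<oplus>\<^bsub>M\<^esub> c))" using M.a_assoc[OF PM[OF abc(1)] PM[OF abc(2)] PM[OF abc(3)]] by simp
      also have "\<dots> = x \<oplus>\<^bsub>Q\<^esub> (y \<oplus>\<^bsub>Q\<^esub> w)"
        using add[OF abc(2,3)] add[OF abc(1) Padd[OF abc(2,3)]] abc(4-6) by simp
      finally show "x \<oplus>\<^bsub>Q\<^esub> y \<oplus>\<^bsub>Q\<^esub> w = x \<oplus>\<^bsub>Q\<^esub> (y \<oplus>\<^bsub>Q\<^esub> w)" .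
    next
      fix x y assume "x \<in> carrier Q" "y \<in> carrier Q"
      then obtain a b where ab: "a\<in>P" "b\<in>P" "x = \<phi> a" "y = \<phi> b" using rep by blast
      have "x \<oplus>\<^bsub>Q\<^esub> y = \<phi> (a \<oplus>\<^bsub>M\<^esub> b)" using add[OF ab(1,2)] ab(3,4) by simp
      also have "\<dots> = \<phi> (b \<oplus>\<^bsub>M\<^esub> a)" using M.a_comm[OF PM[OF ab(1)] PM[OF ab(2)]] by simp
      also have "\<dots> = y \<oplus>\<^bsub>Q\<^esub> x" using add[OF ab(2,1)] ab(3,4) by simp
      finally show "x \<oplus>\<^bsub>Q\<^esub> y = y \<oplus>\<^bsub>Q\<^esub> x" .
    next
      fix x assume "x \<in> carrier Q"
      then obtain a where a: "a\<in>P" "x = \<phi> a" using rep by blast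
      have "\<zero>\<^bsub>Q\<^esub> \<oplus>\<^bsub>Q\<^esub> x = \<phi> (\<zero>\<^bsub>M\<^esub> \<oplus>\<^bsub>M\<^esub> a)" using add[OF P0 a(1)] z a(2) by simp
      also have "\<dots> = x" using M.l_zero[OF PM[OF a(1)]] a(2) by simp
      finally show "\<zero>\<^bsub>Q\<^esub> \<oplus>\<^bsub>Q\<^esub> x = x" .
    next
      fix x assume "x \<in> carrier Q"
      then obtain a where a: "a\<in>P" "x = \<phi> a" using rep by blast
      have "\<phi> (\<ominus>\<^bsub>M\<^esub> a) \<oplus>\<^bsub>Q\<^esub> x = \<phi> (\<ominus>\<^bsub>M\<^esub> a \<oplus>\<^bsub>M\<^esub> a)" using add[OF Pneg[OF a(1)] a(1)] a(2) by simp
      also have "\<dots> = \<zero>\<^bsub>Q\<^esub>" using M.l_neg[OF PM[OF a(1)]] z by simp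
      finally show "\<exists>y\<in>carrier Q. y \<oplus>\<^bsub>Q\<^esub> x = \<zero>\<^bsub>Q\<^esub>" using inQ[OF Pneg[OF a(1)]] by blast
    qed
  next
    fix r x assume r: "r \<in> carrier R" and "x \<in> carrier Q"
    then obtain a where a: "a\<in>P" "x = \<phi> a" using rep by blast
    show "r \<odot>\<^bsub>Q\<^esub> x \<in> carrier Q" using sm[OF r a(1)] inQ[OF Psm[OF r a(1)]] a(2) by simp
  next
    fix r s x assume r: "r \<in> carrier R" and s: "s \<in> carrier R" and "x \<in> carrier Q"
    then obtain a where a: "a\<in>P" "x = \<phi> a" using rep by blast
    have "(r \<oplus>\<^bsub>R\<^esub> s) \<odot>\<^bsub>Q\<^esub> x = \<phi> ((r \<oplus>\<^bsub>R\<^esub> s) \<odot>\<^bsub>M\<^esub> a)" using a sm[OF R.add.m_closed[OF r s] a(1)] by simp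
    also have "\<dots> = \<phi> (r \<odot>\<^bsub>M\<^esub> a \<oplus>\<^bsub>M\<^esub> s \<odot>\<^bsub>M\<^esub> a)" using smult_l_distr[OF r s PM[OF a(1)]] by simp
    also have "\<dots> = r \<odot>\<^bsub>Q\<^esub> x \<oplus>\<^bsub>Q\<^esub> s \<odot>\<^bsub>Q\<^esub> x"
      using add[OF Psm[OF r a(1)] Psm[OF s a(1)]] sm[OF r a(1)] sm[OF s a(1)] a(2) by simp
    finally show "(r \<oplus>\<^bsub>R\<^esub> s) \<odot>\<^bsub>Q\<^esub> x = r \<odot>\<^bsub>Q\<^esub> x \<oplus>\<^bsub>Q\<^esub> s \<odot>\<^bsub>Q\<^esub> x" .
  next
    fix r x y assume r: "r \<in> carrier R" and "x \<in> carrier Q" "y \<in> carrier Q"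
    then obtain a b where ab: "a\<in>P" "b\<in>P" "x = \<phi> a" "y = \<phi> b" using rep by blast
    have "r \<odot>\<^bsub>Q\<^esub> (x \<oplus>\<^bsub>Q\<^esub> y) = \<phi> (r \<odot>\<^bsub>M\<^esub> (a \<oplus>\<^bsub>M\<^esub> b))"
      using add[OF ab(1,2)] sm[OF r Padd[OF ab(1,2)]] ab(3,4) by simp
    also have "\<dots> = \<phi> (r \<odot>\<^bsub>M\<^esub> a \<oplus>\<^bsub>M\<^esub> r \<odot>\<^bsub>M\<^esub> b)" using smult_r_distr[OF r PM[OF ab(1)] PM[OF ab(2)]] by simp
    also have "\<dots> = r \<odot>\<^bsub>Q\<^esub> x \<oplus>\<^bsub>Q\<^esub> r \<odot>\<^bsub>Q\<^esub> y"
      using add[OF Psm[OF r ab(1)] Psm[OF r ab(2)]] sm[OF r ab(1)] sm[OF r ab(2)] ab(3,4) by simp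
    finally show "r \<odot>\<^bsub>Q\<^esub> (x \<oplus>\<^bsub>Q\<^esub> y) = r \<odot>\<^bsub>Q\<^esub> x \<oplus>\<^bsub>Q\<^esub> r \<odot>\<^bsub>Q\<^esub> y" .
  next
    fix r s x assume r: "r \<in> carrier R" and s: "s \<in> carrier R" and "x \<in> carrier Q"
    then obtain a where a: "a\<in>P" "x = \<phi> a" using rep by blast
    have "(r \<otimes>\<^bsub>R\<^esub> s) \<odot>\<^bsub>Q\<^esub> x = \<phi> ((r \<otimes>\<^bsub>R\<^esub> s) \<odot>\<^bsub>M\<^esub> a)" using a sm[OF R.m_closed[OF r s] a(1)] by simp
    also have "\<dots> = \<phi> (r \<odot>\<^bsub>M\<^esub> (s \<odot>\<^bsub>M\<^esub> a))" using smult_assoc1[OF r s PM[OF a(1)]] by simp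
    also have "\<dots> = r \<odot>\<^bsub>Q\<^esub> (s \<odot>\<^bsub>Q\<^esub> x)" using sm[OF r Psm[OF s a(1)]] sm[OF s a(1)] a(2) by simp
    finally show "(r \<otimes>\<^bsub>R\<^esub> s) \<odot>\<^bsub>Q\<^esub> x = r \<odot>\<^bsub>Q\<^esub> (s \<odot>\<^bsub>Q\<^esub> x)" .
  next
    fix x assume "x \<in> carrier Q"
    then obtain a where a: "a\<in>P" "x = \<phi> a" using rep by blast
    show "\<one>\<^bsub>R\<^esub> \<odot>\<^bsub>Q\<^esub> x = x" using sm[OF R.one_closed a(1)] smult_one[OF PM[OF a(1)]] a(2) by simp
  qed
qed

end


context modl begin

lemma Qt_module:
  assumes P: "submodule P R M" and N: "submodule N R M" and NP: "N \<subseteq> P"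
  shows "module R (Qt M P N)"
proof (rule module_transport[OF P, of "\<lambda>a. N +>\<^bsub>M\<^esub> a"])
  show "(+>\<^bsub>M\<^esub>) N ` P = carrier (Qt M P N)" by (simp add: carrier_Qt)
  show "N +>\<^bsub>M\<^esub> (a \<oplus>\<^bsub>M\<^esub> b) = (N +>\<^bsub>M\<^esub> a) \<oplus>\<^bsub>Qt M P N\<^esub> (N +>\<^bsub>M\<^esub> b)" if "a \<in> P" "b \<in> P" for a b
    using add_Qt_coset[OF N] that sub_props(1)[OF P] by auto
  show "N +>\<^bsub>M\<^esub> (r \<odot>\<^bsub>M\<^esub> a) = r \<odot>\<^bsub>Qt M P N\<^esub> (N +>\<^bsub>M\<^esub> a)" if "r \<in> carrier R" "a \<in> P" for r a
    using smult_Qt_coset[OF N] that sub_props(1)[OF P] by auto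
  show "N +>\<^bsub>M\<^esub> \<zero>\<^bsub>M\<^esub> = \<zero>\<^bsub>Qt M P N\<^esub>" using coset_zero[OF N] by simp
qed

lemma hom_props:
  assumes "mod_hom R M M f"
  shows "f \<in> carrier M \<rightarrow> carrier M"
    "\<And>x y. x \<in> carrier M \<Longrightarrow> y \<in> carrier M \<Longrightarrow> f (x \<oplus>\<^bsub>M\<^esub> y) = f x \<oplus>\<^bsub>M\<^esub> f y"
    "\<And>r x. r \<in> carrier R \<Longrightarrow> x \<in> carrier M \<Longrightarrow> f (r \<odot>\<^bsub>M\<^esub> x) = r \<odot>\<^bsub>M\<^esub> f x"
    "f \<zero>\<^bsub>M\<^esub> = \<zero>\<^bsub>M\<^esub>"
proof -
  show fc: "f \<in> carrier M \<rightarrow> carrier M" using assms by (simp add: mod_hom_def)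
  show "\<And>x y. x \<in> carrier M \<Longrightarrow> y \<in> carrier M \<Longrightarrow> f (x \<oplus>\<^bsub>M\<^esub> y) = f x \<oplus>\<^bsub>M\<^esub> f y"
    using assms by (simp add: mod_hom_def)
  show sm: "\<And>r x. r \<in> carrier R \<Longrightarrow> x \<in> carrier M \<Longrightarrow> f (r \<odot>\<^bsub>M\<^esub> x) = r \<odot>\<^bsub>M\<^esub> f x"
    using assms by (simp add: mod_hom_def)
  have "f \<zero>\<^bsub>M\<^esub> = f (\<zero>\<^bsub>R\<^esub> \<odot>\<^bsub>M\<^esub> \<zero>\<^bsub>M\<^esub>)" by simp
  also have "\<dots> = \<zero>\<^bsub>R\<^esub> \<odot>\<^bsub>M\<^esub> f \<zero>\<^bsub>M\<^esub>" using sm[of "\<zero>\<^bsub>R\<^esub>" "\<zero>\<^bsub>M\<^esub>"] by simp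
  also have "\<dots> = \<zero>\<^bsub>M\<^esub>" using fc by (intro smult_l_null) auto
  finally show "f \<zero>\<^bsub>M\<^esub> = \<zero>\<^bsub>M\<^esub>" .
qed

lemma id_hom: "mod_hom R M M id"
  by (simp add: mod_hom_def)

lemma sub_preimage:
  assumes f: "mod_hom R M M f" and P: "submodule P R M" and N': "submodule N' R M"
  shows "submodule {p\<in>P. f p \<in> N'} R M"
proof -
  note fp = hom_props[OF f] and Pp = sub_props[OF P] and Np = sub_props[OF N']
  show ?thesis
  proof (rule submodule_sm)
    show "{p \<in> P. f p \<in> N'} \<subseteq> carrier M" using Pp by auto
    show "\<zero>\<^bsub>M\<^esub> \<in> {p \<in> P. f p \<in> N'}" using Pp Np fp by auto
  next
    fix a b assume "a \<in> {p \<in> P. f p \<in> N'}" "b \<in> {p \<in> P. f p \<in> N'}"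
    then have "a \<in> carrier M" "b \<in> carrier M" using Pp(1) by auto
    then have "f (a \<oplus>\<^bsub>M\<^esub> b) = f a \<oplus>\<^bsub>M\<^esub> f b" using fp(2) by blast
    then show "a \<oplus>\<^bsub>M\<^esub> b \<in> {p \<in> P. f p \<in> N'}" using Pp(3) Np(3) \<open>a \<in> {p \<in> P. f p \<in> N'}\<close> \<open>b \<in> {p \<in> P. f p \<in> N'}\<close> by auto
  next
    fix r a assume "r \<in> carrier R" "a \<in> {p \<in> P. f p \<in> N'}"
    then have "a \<in> carrier M" using Pp(1) by auto
    then have "f (r \<odot>\<^bsub>M\<^esub> a) = r \<odot>\<^bsub>M\<^esub> f a" using fp(3) \<open>r \<in> carrier R\<close> by blast
    then show "r \<odot>\<^bsub>M\<^esub> a \<in> {p \<in> P. f p \<in> N'}" using Pp(4) Np(4) \<open>r \<in> carrier R\<close> \<open>a \<in> {p \<in> P. f p \<in> N'}\<close> by auto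
  qed
qed

lemma sub_sumimg:
  assumes f: "mod_hom R M M f" and P: "submodule P R M" and N': "submodule N' R M"
  shows "submodule (N' <+>\<^bsub>M\<^esub> f ` P) R M"
proof -
  note fp = hom_props[OF f] and Pp = sub_props[OF P] and Np = sub_props[OF N']
  have fPc: "f p \<in> carrier M" if "p \<in> P" for p using that Pp(1) fp(1) by auto
  have NM: "n \<in> carrier M" if "n \<in> N'" for n using that Np(1) by auto
  have PM: "n \<in> carrier M" if "n \<in> P" for n using that Pp(1) by auto
  show ?thesis
  proof (rule submodule_sm)
    show "N' <+>\<^bsub>M\<^esub> f ` P \<subseteq> carrier M" using fPc NM by (auto simp: setadd_mem)
    have "\<zero>\<^bsub>M\<^esub> = \<zero>\<^bsub>M\<^esub> \<oplus>\<^bsub>M\<^esub> f \<zero>\<^bsub>M\<^esub>" using fp(4) by simp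
    then show "\<zero>\<^bsub>M\<^esub> \<in> N' <+>\<^bsub>M\<^esub> f ` P" unfolding setadd_mem using Np(2) Pp(2) by blast
  next
    fix a b assume "a \<in> N' <+>\<^bsub>M\<^esub> f ` P" "b \<in> N' <+>\<^bsub>M\<^esub> f ` P"
    then obtain n1 p1 n2 p2 where h: "n1 \<in> N'" "p1 \<in> P" "n2 \<in> N'" "p2 \<in> P"
      and ab: "a = n1 \<oplus>\<^bsub>M\<^esub> f p1" "b = n2 \<oplus>\<^bsub>M\<^esub> f p2" by (auto simp: setadd_mem)
    have "a \<oplus>\<^bsub>M\<^esub> b = (n1 \<oplus>\<^bsub>M\<^esub> n2) \<oplus>\<^bsub>M\<^esub> (f p1 \<oplus>\<^bsub>M\<^esub> f p2)"
      using ab NM[OF h(1)] NM[OF h(3)] fPc[OF h(2)] fPc[OF h(4)] by (simp add: M.a_ac)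
    also have "\<dots> = (n1 \<oplus>\<^bsub>M\<^esub> n2) \<oplus>\<^bsub>M\<^esub> f (p1 \<oplus>\<^bsub>M\<^esub> p2)"
      using fp(2)[of p1 p2] PM[OF h(2)] PM[OF h(4)] by simp
    finally show "a \<oplus>\<^bsub>M\<^esub> b \<in> N' <+>\<^bsub>M\<^esub> f ` P" unfolding setadd_mem using h Np(3) Pp(3) by blast
  next
    fix r a assume r: "r \<in> carrier R" and "a \<in> N' <+>\<^bsub>M\<^esub> f ` P"
    then obtain n p where h: "n \<in> N'" "p \<in> P" and a: "a = n \<oplus>\<^bsub>M\<^esub> f p" by (auto simp: setadd_mem)
    have "r \<odot>\<^bsub>M\<^esub> a = r \<odot>\<^bsub>M\<^esub> n \<oplus>\<^bsub>M\<^esub> r \<odot>\<^bsub>M\<^esub> f p" using a r smult_r_distr NM[OF h(1)] fPc[OF h(2)] by simp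
    also have "\<dots> = r \<odot>\<^bsub>M\<^esub> n \<oplus>\<^bsub>M\<^esub> f (r \<odot>\<^bsub>M\<^esub> p)" using fp(3)[OF r PM[OF h(2)]] by simp
    finally show "r \<odot>\<^bsub>M\<^esub> a \<in> N' <+>\<^bsub>M\<^esub> f ` P" unfolding setadd_mem using h r Np(4) Pp(4) by blast
  qed
qed

lemma sumimg_sup:
  assumes f: "mod_hom R M M f" and P: "submodule P R M" and N': "submodule N' R M"
  shows "N' \<subseteq> N' <+>\<^bsub>M\<^esub> f ` P" "f ` P \<subseteq> N' <+>\<^bsub>M\<^esub> f ` P"
proof -
  note fp = hom_props[OF f] and Pp = sub_props[OF P] and Np = sub_props[OF N']
  show "N' \<subseteq> N' <+>\<^bsub>M\<^esub> f ` P"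
  proof
    fix n assume n: "n \<in> N'"
    then have "n = n \<oplus>\<^bsub>M\<^esub> f \<zero>\<^bsub>M\<^esub>" using fp(4) Np(1) by auto
    then show "n \<in> N' <+>\<^bsub>M\<^esub> f ` P" unfolding setadd_mem using n Pp(2) by blast
  qed
  show "f ` P \<subseteq> N' <+>\<^bsub>M\<^esub> f ` P"
  proof
    fix y assume "y \<in> f ` P"
    then obtain p where p: "p \<in> P" "y = f p" by auto
    then have "f p \<in> carrier M" using fp(1) Pp(1) by auto
    then have "y = \<zero>\<^bsub>M\<^esub> \<oplus>\<^bsub>M\<^esub> f p" using p by simp
    then show "y \<in> N' <+>\<^bsub>M\<^esub> f ` P" unfolding setadd_mem using p Np(2) by blast
  qed
qed

lemma Qt_hom_val:
  assumes f: "mod_hom R M M f" and N: "submodule N R M" and N': "submodule N' R M"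
    and fN: "f ` N \<subseteq> N'" and a: "a \<in> carrier M"
  shows "N' <+>\<^bsub>M\<^esub> f ` (N +>\<^bsub>M\<^esub> a) = N' +>\<^bsub>M\<^esub> f a"
  using coset_image[OF hom_props(1,2)[OF f] N N' fN a] .

lemma Qt_hom:
  assumes f: "mod_hom R M M f" and P: "submodule P R M" and N: "submodule N R M"
    and P': "submodule P' R M" and N': "submodule N' R M"
    and fP: "f ` P \<subseteq> P'" and fN: "f ` N \<subseteq> N'"
  shows "mod_hom R (Qt M P N) (Qt M P' N') (\<lambda>C. N' <+>\<^bsub>M\<^esub> f ` C)"
proof -
  note fp = hom_props[OF f] and Pp = sub_props[OF P]
  have PM: "a \<in> carrier M" if "a \<in> P" for a using that Pp(1) by auto
  have val: "N' <+>\<^bsub>M\<^esub> f ` (N +>\<^bsub>M\<^esub> a) = N' +>\<^bsub>M\<^esub> f a" if "a \<in> P" for a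
    using Qt_hom_val[OF f N N' fN PM[OF that]] .
  have fa: "f a \<in> carrier M" if "a \<in> P" for a using fp(1) PM[OF that] by auto
  show ?thesis unfolding mod_hom_def
  proof (intro conjI ballI)
    show "(\<lambda>C. N' <+>\<^bsub>M\<^esub> f ` C) \<in> carrier (Qt M P N) \<rightarrow> carrier (Qt M P' N')"
      using val fP by (auto simp: carrier_Qt)
  next
    fix x y assume "x \<in> carrier (Qt M P N)" "y \<in> carrier (Qt M P N)"
    then obtain a b where ab: "a \<in> P" "b \<in> P" "x = N +>\<^bsub>M\<^esub> a" "y = N +>\<^bsub>M\<^esub> b" by (auto simp: carrier_Qt)
    have "x \<oplus>\<^bsub>Qt M P N\<^esub> y = N +>\<^bsub>M\<^esub> (a \<oplus>\<^bsub>M\<^esub> b)" using add_Qt_coset[OF N PM[OF ab(1)] PM[OF ab(2)]] ab by simp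
    moreover have "a \<oplus>\<^bsub>M\<^esub> b \<in> P" using ab Pp(3) by blast
    ultimately have "N' <+>\<^bsub>M\<^esub> f ` (x \<oplus>\<^bsub>Qt M P N\<^esub> y) = N' +>\<^bsub>M\<^esub> f (a \<oplus>\<^bsub>M\<^esub> b)" using val by simp
    also have "\<dots> = N' +>\<^bsub>M\<^esub> (f a \<oplus>\<^bsub>M\<^esub> f b)" using fp(2)[OF PM[OF ab(1)] PM[OF ab(2)]] by simp
    also have "\<dots> = (N' +>\<^bsub>M\<^esub> f a) \<oplus>\<^bsub>Qt M P' N'\<^esub> (N' +>\<^bsub>M\<^esub> f b)"
      using add_Qt_coset[OF N' fa[OF ab(1)] fa[OF ab(2)]] by simp
    finally show "N' <+>\<^bsub>M\<^esub> f ` (x \<oplus>\<^bsub>Qt M P N\<^esub> y) = (N' <+>\<^bsub>M\<^esub> f ` x) \<oplus>\<^bsub>Qt M P' N'\<^esub> (N' <+>\<^bsub>M\<^esub> f ` y)"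
      using val ab by simp
  next
    fix r x assume r: "r \<in> carrier R" and "x \<in> carrier (Qt M P N)"
    then obtain a where a: "a \<in> P" "x = N +>\<^bsub>M\<^esub> a" by (auto simp: carrier_Qt)
    have "r \<odot>\<^bsub>Qt M P N\<^esub> x = N +>\<^bsub>M\<^esub> (r \<odot>\<^bsub>M\<^esub> a)" using smult_Qt_coset[OF N r PM[OF a(1)]] a by simp
    moreover have "r \<odot>\<^bsub>M\<^esub> a \<in> P" using a r Pp(4) by blast
    ultimately have "N' <+>\<^bsub>M\<^esub> f ` (r \<odot>\<^bsub>Qt M P N\<^esub> x) = N' +>\<^bsub>M\<^esub> f (r \<odot>\<^bsub>M\<^esub> a)" using val by simp
    also have "\<dots> = N' +>\<^bsub>M\<^esub> (r \<odot>\<^bsub>M\<^esub> f a)" using fp(3)[OF r PM[OF a(1)]] by simp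
    also have "\<dots> = r \<odot>\<^bsub>Qt M P' N'\<^esub> (N' +>\<^bsub>M\<^esub> f a)" using smult_Qt_coset[OF N' r fa[OF a(1)]] by simp
    finally show "N' <+>\<^bsub>M\<^esub> f ` (r \<odot>\<^bsub>Qt M P N\<^esub> x) = r \<odot>\<^bsub>Qt M P' N'\<^esub> (N' <+>\<^bsub>M\<^esub> f ` x)"
      using val a by simp
  qed
qed

end


context modl begin

lemma S1:
  assumes f: "mod_hom R M M f" and P: "submodule P R M" and N: "submodule N R M"
    and N': "submodule N' R M" and NP: "N \<subseteq> P" and fN: "f ` N \<subseteq> N'"
  shows "short_exact R (Qt M {p\<in>P. f p \<in> N'} N) (Qt M P N) (Qt M (N' <+>\<^bsub>M\<^esub> f ` P) N')
           (\<lambda>C. N <+>\<^bsub>M\<^esub> id ` C) (\<lambda>C. N' <+>\<^bsub>M\<^esub> f ` C)"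
proof -
  define K where "K = {p\<in>P. f p \<in> N'}"
  define I where "I = N' <+>\<^bsub>M\<^esub> f ` P"
  note fp = hom_props[OF f] and Pp = sub_props[OF P]
  have K: "submodule K R M" unfolding K_def by (rule sub_preimage[OF f P N'])
  have I: "submodule I R M" unfolding I_def by (rule sub_sumimg[OF f P N'])
  have KP: "K \<subseteq> P" by (auto simp: K_def)
  have NK: "N \<subseteq> K" using NP fN by (auto simp: K_def)
  have fPI: "f ` P \<subseteq> I" and N'I: "N' \<subseteq> I" unfolding I_def using sumimg_sup[OF f P N'] by auto
  have PM: "a \<in> carrier M" if "a \<in> P" for a using that Pp(1) by auto
  have h1: "mod_hom R (Qt M K N) (Qt M P N) (\<lambda>C. N <+>\<^bsub>M\<^esub> id ` C)"
    by (rule Qt_hom[OF id_hom K N P N]) (use KP in auto)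
  have h2: "mod_hom R (Qt M P N) (Qt M I N') (\<lambda>C. N' <+>\<^bsub>M\<^esub> f ` C)"
    by (rule Qt_hom[OF f P N I N' fPI fN])
  have idv: "N <+>\<^bsub>M\<^esub> id ` C = C" if C: "C \<in> carrier (Qt M K N)" for C
  proof -
    obtain a where a: "a \<in> K" "C = N +>\<^bsub>M\<^esub> a" using C by (auto simp: carrier_Qt)
    then show ?thesis using Qt_hom_val[OF id_hom N N _ PM] KP by auto
  qed
  have gv: "N' <+>\<^bsub>M\<^esub> f ` (N +>\<^bsub>M\<^esub> a) = N' +>\<^bsub>M\<^esub> f a" if "a \<in> P" for a
    using Qt_hom_val[OF f N N' fN PM[OF that]] .
  have inj: "inj_on (\<lambda>C. N <+>\<^bsub>M\<^esub> id ` C) (carrier (Qt M K N))"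
    using idv by (simp add: inj_on_def)
  have surj: "(\<lambda>C. N' <+>\<^bsub>M\<^esub> f ` C) ` carrier (Qt M P N) = carrier (Qt M I N')"
  proof (intro Set.set_eqI iffI)
    fix y assume "y \<in> (\<lambda>C. N' <+>\<^bsub>M\<^esub> f ` C) ` carrier (Qt M P N)"
    then show "y \<in> carrier (Qt M I N')" using h2 by (auto simp: mod_hom_def)
  next
    fix y assume "y \<in> carrier (Qt M I N')"
    then obtain i where i: "i \<in> I" "y = N' +>\<^bsub>M\<^esub> i" by (auto simp: carrier_Qt)
    then obtain n p where np: "n \<in> N'" "p \<in> P" "i = n \<oplus>\<^bsub>M\<^esub> f p" by (auto simp: I_def setadd_mem)
    have nc: "n \<in> carrier M" using np sub_props(1)[OF N'] by auto
    have fpc: "f p \<in> carrier M" using fp(1) PM[OF np(2)] by auto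
    have "i \<ominus>\<^bsub>M\<^esub> f p = n" using np(3) nc fpc by (simp add: a_minus_def M.a_assoc M.r_neg)
    then have "N' +>\<^bsub>M\<^esub> i = N' +>\<^bsub>M\<^esub> f p"
      using coset_eq_iff[OF N'] np(1) nc fpc np(3) by simp
    then have "y = N' <+>\<^bsub>M\<^esub> f ` (N +>\<^bsub>M\<^esub> p)" using i gv[OF np(2)] by simp
    moreover have "N +>\<^bsub>M\<^esub> p \<in> carrier (Qt M P N)" using np(2) by (auto simp: carrier_Qt)
    ultimately show "y \<in> (\<lambda>C. N' <+>\<^bsub>M\<^esub> f ` C) ` carrier (Qt M P N)" by blast
  qed
  have ker: "(\<lambda>C. N <+>\<^bsub>M\<^esub> id ` C) ` carrier (Qt M K N)
      = {x \<in> carrier (Qt M P N). N' <+>\<^bsub>M\<^esub> f ` x = \<zero>\<^bsub>Qt M I N'\<^esub>}"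
  proof -
    have "(\<lambda>C. N <+>\<^bsub>M\<^esub> id ` C) ` carrier (Qt M K N) = carrier (Qt M K N)"
      using idv by simp
    also have "\<dots> = {x \<in> carrier (Qt M P N). N' <+>\<^bsub>M\<^esub> f ` x = \<zero>\<^bsub>Qt M I N'\<^esub>}"
    proof (intro Set.set_eqI iffI)
      fix x assume "x \<in> carrier (Qt M K N)"
      then obtain a where a: "a \<in> K" "x = N +>\<^bsub>M\<^esub> a" by (auto simp: carrier_Qt)
      have aP: "a \<in> P" "f a \<in> N'" using a by (auto simp: K_def)
      have "N' +>\<^bsub>M\<^esub> f a = N'" using coset_zero_iff[OF N'] aP fp(1) PM by auto
      then show "x \<in> {x \<in> carrier (Qt M P N). N' <+>\<^bsub>M\<^esub> f ` x = \<zero>\<^bsub>Qt M I N'\<^esub>}"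
        using a aP gv[OF aP(1)] by (auto simp: carrier_Qt)
    next
      fix x assume "x \<in> {x \<in> carrier (Qt M P N). N' <+>\<^bsub>M\<^esub> f ` x = \<zero>\<^bsub>Qt M I N'\<^esub>}"
      then obtain a where a: "a \<in> P" "x = N +>\<^bsub>M\<^esub> a" and z: "N' <+>\<^bsub>M\<^esub> f ` x = N'"
        by (auto simp: carrier_Qt)
      have "N' +>\<^bsub>M\<^esub> f a = N'" using z gv[OF a(1)] a(2) by simp
      then have "f a \<in> N'" using coset_zero_iff[OF N'] fp(1) PM[OF a(1)] by auto
      then show "x \<in> carrier (Qt M K N)" using a by (auto simp: carrier_Qt K_def)
    qed
    finally show ?thesis .
  qed
  show ?thesis
    unfolding short_exact_def K_def[symmetric] I_def[symmetric]
    using h1 h2 inj surj ker by blast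
qed

end


lemma coeff_E:
  fixes d :: nat
  defines "E \<equiv> ([:1,1:] ^ Suc d - monom 1 (Suc d) :: real poly)"
  shows "coeff E d = real (Suc d)" and "\<And>i. i > d \<Longrightarrow> coeff E i = 0"
    and "\<And>x. poly E x = (x + 1) ^ Suc d - x ^ Suc d"
proof -
  have c: "coeff ([:1,1:] ^ Suc d :: real poly) i = of_nat (Suc d choose i)" if "i \<le> Suc d" for i
    using coeff_linear_poly_power[OF that, of "1::real" 1] by simp
  have dg: "degree ([:1,1:] ^ Suc d :: real poly) = Suc d"
    using degree_linear_power[of "1::real" "Suc d"] by simp
  show "coeff E d = real (Suc d)" unfolding E_def using c[of d] by simp
  show "coeff E i = 0" if "i > d" for i
  proof (cases "i = Suc d")
    case True
    then show ?thesis unfolding E_def using c[of i] by simp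
  next
    case False
    then have "i > Suc d" using that by simp
    then have "coeff ([:1,1:] ^ Suc d :: real poly) i = 0" using dg coeff_eq_0[of "[:1,1:] ^ Suc d :: real poly" i] by (simp del: power_Suc)
    then show ?thesis unfolding E_def using False by simp
  qed
  show "poly E x = (x + 1) ^ Suc d - x ^ Suc d" for x
    unfolding E_def by (simp add: poly_monom add.commute algebra_simps)
qed

lemma antidiff:
  fixes D :: "real poly"
  shows "\<exists>Q. (\<forall>x. poly Q (x+1) - poly Q x = poly D x) \<and> (D = 0 \<longrightarrow> Q = 0) \<and> degree Q \<le> Suc (degree D)"
proof (induction "degree D" arbitrary: D rule: less_induct)
  case less
  show ?case
  proof (cases "D = 0")
    case True
    then show ?thesis by (intro exI[of _ 0]) simp
  next
    case False
    define d where "d = degree D"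
    define E where "E = ([:1,1:] ^ Suc d - monom 1 (Suc d) :: real poly)"
    define c where "c = lead_coeff D / real (Suc d)"
    define D' where "D' = D - smult c E"
    note cE = coeff_E[of d, folded E_def]
    have z: "coeff D' i = 0" if "i \<ge> d" for i
    proof (cases "i = d")
      case True
      then show ?thesis unfolding D'_def c_def using cE(1) by (simp add: d_def)
    next
      case False
      then have "i > d" using that by simp
      then show ?thesis unfolding D'_def using cE(2)[of i] by (simp add: d_def coeff_eq_0)
    qed
    have "\<exists>Q'. (\<forall>x. poly Q' (x+1) - poly Q' x = poly D' x) \<and> degree Q' \<le> d"
    proof (cases "D' = 0")
      case True
      then show ?thesis by (intro exI[of _ 0]) simp
    next
      case False
      then have "coeff D' (degree D') \<noteq> 0" by simp
      then have lt: "degree D' < d" using z by (meson not_le)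
      then have "degree D' < degree D" by (simp add: d_def)
      from less(1)[OF this] obtain Q' where "\<forall>x. poly Q' (x+1) - poly Q' x = poly D' x" "degree Q' \<le> Suc (degree D')"
        by blast
      then show ?thesis using lt by (intro exI[of _ Q']) auto
    qed
    then obtain Q' where Q': "\<forall>x. poly Q' (x+1) - poly Q' x = poly D' x" "degree Q' \<le> d" by blast
    define Q where "Q = smult c (monom 1 (Suc d)) + Q'"
    have "poly Q (x+1) - poly Q x = poly D x" for x
    proof -
      have "poly Q (x+1) - poly Q x = c * ((x+1) ^ Suc d - x ^ Suc d) + (poly Q' (x+1) - poly Q' x)"
        unfolding Q_def by (simp add: poly_monom algebra_simps)
      also have "\<dots> = c * poly E x + poly D' x" using cE(3) Q'(1) by simp
      also have "\<dots> = poly D x" unfolding D'_def by simp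
      finally show ?thesis .
    qed
    moreover have "degree Q \<le> Suc (degree D)"
    proof -
      have "degree (smult c (monom 1 (Suc d)) :: real poly) \<le> Suc d"
        by (metis degree_monom_le degree_smult_le order.trans)
      then show ?thesis unfolding Q_def using Q'(2) degree_add_le d_def
        by (metis le_SucI)
    qed
    ultimately show ?thesis using False by blast
  qed
qed

lemma poly_from_diff:
  fixes a :: "nat \<Rightarrow> real" and D :: "real poly"
  assumes diff: "\<forall>n\<ge>N0. a (Suc n) - a n = poly D (real n)" and dD: "D = 0 \<or> degree D < k"
  shows "\<exists>q. degree q < Suc k \<and> (\<forall>n\<ge>N0. a n = poly q (real n))"
proof -
  obtain Q where Q: "\<forall>x. poly Q (x+1) - poly Q x = poly D x" "D = 0 \<longrightarrow> Q = 0" "degree Q \<le> Suc (degree D)"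
    using antidiff by blast
  define c where "c = a N0 - poly Q (real N0)"
  define q where "q = Q + [:c:]"
  have "a n = poly q (real n)" if "n \<ge> N0" for n
    using that
  proof (induction n rule: dec_induct)
    case base
    then show ?case by (simp add: q_def c_def)
  next
    case (step n)
    have "a (Suc n) = a n + poly D (real n)" using diff step(1) by force
    also have "\<dots> = poly Q (real n) + c + (poly Q (real n + 1) - poly Q (real n))"
      using step(3) Q(1) by (simp add: q_def)
    also have "\<dots> = poly q (real (Suc n))" by (simp add: q_def add.commute)
    finally show ?case .
  qed
  moreover have "degree q < Suc k"
  proof -
    have "degree q \<le> degree Q" unfolding q_def
      by (metis degree_add_le degree_pCons_0 le_zero_eq order_refl pCons_0_0 zero_le)
    moreover have "degree Q < Suc k" using Q dD by auto
    ultimately show ?thesis by simp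
  qed
  ultimately show ?thesis by blast
qed


definition gfam :: "'r ring \<Rightarrow> ('r,'a) module \<Rightarrow> nat \<Rightarrow> (nat \<Rightarrow> 'a \<Rightarrow> 'a) \<Rightarrow> (nat \<Rightarrow> 'a set) \<Rightarrow> (nat \<Rightarrow> 'a set) \<Rightarrow> bool" where
  "gfam R M k X P N \<longleftrightarrow> (\<forall>j<k. mod_hom R M M (X j))
     \<and> (\<forall>i<k. \<forall>j<k. \<forall>x\<in>carrier M. X i (X j x) = X j (X i x))
     \<and> (\<forall>n. submodule (P n) R M \<and> submodule (N n) R M \<and> N n \<subseteq> P n
           \<and> (\<forall>j<k. X j ` P n \<subseteq> P (Suc n) \<and> X j ` N n \<subseteq> N (Suc n)))"

definition gfg :: "'r ring \<Rightarrow> ('r,'a) module \<Rightarrow> nat \<Rightarrow> (nat \<Rightarrow> 'a \<Rightarrow> 'a) \<Rightarrow> (nat \<Rightarrow> 'a set) \<Rightarrow> (nat \<Rightarrow> 'a set) \<Rightarrow> bool" where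
  "gfg R M k X P N \<longleftrightarrow> (\<forall>H. (\<forall>n. submodule (H n) R M \<and> N n \<subseteq> H n \<and> H n \<subseteq> P n
        \<and> (\<forall>j<k. X j ` H n \<subseteq> H (Suc n)))
     \<longrightarrow> (\<exists>n0. \<forall>n\<ge>n0. H (Suc n) \<subseteq> submod_span R M (N (Suc n) \<union> (\<Union>j<k. X j ` H n))))"

lemma span_mono: "S \<subseteq> T \<Longrightarrow> submod_span R M S \<subseteq> submod_span R M T"
  unfolding submod_span_def by blast

lemma span_le: "S \<subseteq> H \<Longrightarrow> submodule H R M \<Longrightarrow> submod_span R M S \<subseteq> H"
  unfolding submod_span_def by blast

lemma span_sup: "S \<subseteq> submod_span R M S"
  unfolding submod_span_def by blast

lemma fin_real:
  assumes "(a::ennreal) < \<infinity>" shows "\<exists>r\<ge>0. a = ennreal r"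
proof (cases a rule: ennreal_cases)
  case (real r) then show ?thesis by blast
next
  case top then show ?thesis using assms by simp
qed

lemma e2r_add:
  assumes "(a::ennreal) < \<infinity>" "b < \<infinity>"
  shows "enn2real (a + b) = enn2real a + enn2real b"
proof -
  obtain r where "r \<ge> 0" "a = ennreal r" using fin_real[OF assms(1)] by blast
  moreover obtain s where "s \<ge> 0" "b = ennreal s" using fin_real[OF assms(2)] by blast
  ultimately have "a + b = ennreal (r + s)" "a = ennreal r" "b = ennreal s" "r \<ge> 0" "s \<ge> 0"
    by (simp_all add: ennreal_plus)
  have "enn2real (ennreal (r + s)) = r + s" by (rule enn2real_ennreal) (use \<open>r \<ge> 0\<close> \<open>s \<ge> 0\<close> in simp)
  then show ?thesis using \<open>a + b = ennreal (r + s)\<close> \<open>a = ennreal r\<close> \<open>b = ennreal s\<close> \<open>r \<ge> 0\<close> \<open>s \<ge> 0\<close>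
    by (metis enn2real_ennreal)
qed

context modl begin

lemma lam_S1:
  assumes lf: "length_function R lam"
    and f: "mod_hom R M M f" and P: "submodule P R M" and N: "submodule N R M"
    and N': "submodule N' R M" and NP: "N \<subseteq> P" and fN: "f ` N \<subseteq> N'"
  shows "lam (Qt M P N) = lam (Qt M {p\<in>P. f p \<in> N'} N) + lam (Qt M (N' <+>\<^bsub>M\<^esub> f ` P) N')"
proof -
  have K: "submodule {p\<in>P. f p \<in> N'} R M" by (rule sub_preimage[OF f P N'])
  have I: "submodule (N' <+>\<^bsub>M\<^esub> f ` P) R M" by (rule sub_sumimg[OF f P N'])
  have NK: "N \<subseteq> {p\<in>P. f p \<in> N'}" using NP fN by auto
  have N'I: "N' \<subseteq> N' <+>\<^bsub>M\<^esub> f ` P" using sumimg_sup[OF f P N'] by auto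
  have m1: "module R (Qt M {p\<in>P. f p \<in> N'} N)" by (rule Qt_module[OF K N NK])
  have m2: "module R (Qt M P N)" by (rule Qt_module[OF P N NP])
  have m3: "module R (Qt M (N' <+>\<^bsub>M\<^esub> f ` P) N')" by (rule Qt_module[OF I N' N'I])
  have se: "short_exact R (Qt M {p\<in>P. f p \<in> N'} N) (Qt M P N) (Qt M (N' <+>\<^bsub>M\<^esub> f ` P) N')
           (\<lambda>C. N <+>\<^bsub>M\<^esub> id ` C) (\<lambda>C. N' <+>\<^bsub>M\<^esub> f ` C)"
    by (rule S1[OF f P N N' NP fN])
  note ax = lf[unfolded length_function_def, THEN conjunct2, THEN conjunct2, THEN conjunct1, rule_format]
  show ?thesis by (rule ax) (use m1 m2 m3 se in auto)
qed

lemma lam_S2: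
  assumes lf: "length_function R lam"
    and P: "submodule P R M" and N: "submodule N R M" and I: "submodule I R M"
    and NI: "N \<subseteq> I" and IP: "I \<subseteq> P"
  shows "lam (Qt M P N) = lam (Qt M I N) + lam (Qt M P I)"
proof -
  have e1: "{p\<in>P. id p \<in> I} = I" using IP by auto
  have e2: "I <+>\<^bsub>M\<^esub> id ` P = P"
  proof (intro Set.set_eqI iffI)
    fix x assume "x \<in> I <+>\<^bsub>M\<^esub> id ` P"
    then obtain i p where "i \<in> I" "p \<in> P" "x = i \<oplus>\<^bsub>M\<^esub> p" by (auto simp: setadd_mem)
    then show "x \<in> P" using IP sub_props(3)[OF P] by auto
  next
    fix x assume "x \<in> P"
    then show "x \<in> I <+>\<^bsub>M\<^esub> id ` P" using sumimg_sup(2)[OF id_hom P I] by auto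
  qed
  show ?thesis using lam_S1[OF lf id_hom P N I] NI IP unfolding e1 e2 by auto
qed

lemma lam_triv:
  assumes lf: "length_function R lam" and N: "submodule N R M"
  shows "lam (Qt M N N) = 0"
proof -
  have "carrier (Qt M N N) = {N}"
    using coset_zero_iff[OF N] sub_props(1,2)[OF N] by (auto simp: carrier_Qt)
  then have "carrier (Qt M N N) = {\<zero>\<^bsub>Qt M N N\<^esub>}" by simp
  moreover have "module R (Qt M N N)" by (rule Qt_module[OF N N]) simp
  ultimately show ?thesis using lf[unfolded length_function_def, THEN conjunct1, rule_format, of "Qt M N N"] by auto
qed

end


context modl begin

lemma hilbert:
  assumes lf: "length_function R lam"
  shows "gfam R M k X P N \<Longrightarrow> gfg R M k X P N \<Longrightarrow> (\<exists>n0. \<forall>n\<ge>n0. lam (Qt M (P n) (N n)) < \<infinity>) \<Longrightarrow>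
    \<exists>q. (q = 0 \<or> degree q < k) \<and> (\<exists>N0. \<forall>n\<ge>N0. lam (Qt M (P n) (N n)) = ennreal (poly q (real n)) \<and> poly q (real n) \<ge> 0)"
proof (induction k arbitrary: P N)
  case 0
  have fam: "\<And>n. submodule (P n) R M" "\<And>n. submodule (N n) R M" "\<And>n. N n \<subseteq> P n"
    using 0(1) by (simp_all add: gfam_def)
  have HP: "\<forall>n. submodule (P n) R M \<and> N n \<subseteq> P n \<and> P n \<subseteq> P n \<and> (\<forall>j<0. X j ` P n \<subseteq> P (Suc n))"
    using fam by auto
  obtain n0 where n0: "\<forall>n\<ge>n0. P (Suc n) \<subseteq> submod_span R M (N (Suc n) \<union> (\<Union>j<(0::nat). X j ` P n))"
    using 0(2)[unfolded gfg_def, THEN spec[of _ P], THEN mp, OF HP] by blast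
  have "lam (Qt M (P n) (N n)) = 0" if nn: "n \<ge> Suc n0" for n
  proof -
    obtain m where m: "n = Suc m" "m \<ge> n0" using nn by (cases n) auto
    have "P n \<subseteq> submod_span R M (N n)" using n0 m by auto
    also have "\<dots> \<subseteq> N n" by (rule span_le[OF subset_refl fam(2)])
    finally have "P n = N n" using fam(3)[of n] by auto
    then show ?thesis using lam_triv[OF lf fam(2)[of n]] by simp
  qed
  then show ?case by (intro exI[of _ 0] conjI exI[of _ "Suc n0"]) auto
next
  case (Suc k)
  have homs: "\<And>j. j < Suc k \<Longrightarrow> mod_hom R M M (X j)"
    using Suc.prems(1) by (simp add: gfam_def)
  have comm: "\<And>i j x. i < Suc k \<Longrightarrow> j < Suc k \<Longrightarrow> x \<in> carrier M \<Longrightarrow> X i (X j x) = X j (X i x)"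
    using Suc.prems(1) by (simp add: gfam_def)
  have fam: "\<And>n. submodule (P n) R M" "\<And>n. submodule (N n) R M" "\<And>n. N n \<subseteq> P n"
    using Suc.prems(1) by (simp_all add: gfam_def)
  have maps: "\<And>n j. j < Suc k \<Longrightarrow> X j ` P n \<subseteq> P (Suc n)" "\<And>n j. j < Suc k \<Longrightarrow> X j ` N n \<subseteq> N (Suc n)"
    using Suc.prems(1) by (simp_all add: gfam_def)
  have xh: "mod_hom R M M (X k)" using homs by simp
  define PK where "PK n = {p \<in> P n. X k p \<in> N (Suc n)}" for n
  define NC where "NC n = (case n of 0 \<Rightarrow> N 0 | Suc m \<Rightarrow> N (Suc m) <+>\<^bsub>M\<^esub> X k ` P m)" for n
  have NC0: "NC 0 = N 0" by (simp add: NC_def)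
  have NCS: "NC (Suc m) = N (Suc m) <+>\<^bsub>M\<^esub> X k ` P m" for m by (simp add: NC_def)
  have Pc: "p \<in> carrier M" if "p \<in> P n" for p n using sub_props(1)[OF fam(1)] that by auto
  have PKsub: "submodule (PK n) R M" for n unfolding PK_def by (rule sub_preimage[OF xh fam(1) fam(2)])
  have NCsub: "submodule (NC n) R M" for n
    by (cases n) (simp_all add: NC0 NCS fam sub_sumimg[OF xh fam(1) fam(2)])
  have NNC: "N n \<subseteq> NC n" for n
    by (cases n) (simp_all add: NC0 NCS sumimg_sup(1)[OF xh fam(1) fam(2)])
  have XPNC: "X k ` P n \<subseteq> NC (Suc n)" for n using sumimg_sup(2)[OF xh fam(1) fam(2)] by (simp add: NCS)
  have NCP: "NC n \<subseteq> P n" for n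
  proof (cases n)
    case 0 then show ?thesis using fam(3) by (simp add: NC0)
  next
    case (Suc m)
    show ?thesis
    proof
      fix y assume "y \<in> NC n"
      then obtain a p where ap: "a \<in> N (Suc m)" "p \<in> P m" "y = a \<oplus>\<^bsub>M\<^esub> X k p"
        using Suc by (auto simp: NCS setadd_mem)
      have "X k p \<in> P (Suc m)" using maps(1)[of k m] ap(2) by auto
      moreover have "a \<in> P (Suc m)" using fam(3) ap(1) by auto
      ultimately show "y \<in> P n" using Suc ap(3) sub_props(3)[OF fam(1)] by blast
    qed
  qed
  have NPK: "N n \<subseteq> PK n" for n using fam(3) maps(2)[of k n] by (auto simp: PK_def)
  have PKP: "PK n \<subseteq> P n" for n by (auto simp: PK_def)

  have famK: "gfam R M k X PK N"
    unfolding gfam_def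
  proof (intro conjI allI impI ballI)
    show "mod_hom R M M (X j)" if "j<k" for j using homs that by simp
    show "X i (X j x) = X j (X i x)" if "i<k" "j<k" "x \<in> carrier M" for i j x using comm that by simp
    fix n
    show "submodule (PK n) R M" by (rule PKsub)
    show "submodule (N n) R M" by (rule fam(2))
    show "N n \<subseteq> PK n" by (rule NPK)
    fix j assume j: "j < k"
    show "X j ` N n \<subseteq> N (Suc n)" using maps(2)[of j n] j by simp
    show "X j ` PK n \<subseteq> PK (Suc n)"
    proof
      fix y assume "y \<in> X j ` PK n"
      then obtain p where p: "p \<in> P n" "X k p \<in> N (Suc n)" "y = X j p" by (auto simp: PK_def)
      have "X j p \<in> P (Suc n)" using maps(1)[of j n] j p by auto
      moreover have "X k (X j p) = X j (X k p)" using comm[of k j p] j Pc[OF p(1)] by simp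
      moreover have "X j (X k p) \<in> N (Suc (Suc n))" using maps(2)[of j "Suc n"] j p by auto
      ultimately show "y \<in> PK (Suc n)" using p by (simp add: PK_def)
    qed
  qed

  have gK: "gfg R M k X PK N"
    unfolding gfg_def
  proof (intro allI impI)
    fix H assume HH: "\<forall>n. submodule (H n) R M \<and> N n \<subseteq> H n \<and> H n \<subseteq> PK n \<and> (\<forall>j<k. X j ` H n \<subseteq> H (Suc n))"
    have Hsub: "submodule (H n) R M" for n using HH by blast
    have HN: "N n \<subseteq> H n" for n using HH by blast
    have HP: "H n \<subseteq> PK n" for n using HH by blast
    have HX: "X j ` H n \<subseteq> H (Suc n)" if "j < k" for n j using HH that by blast
    have XkH: "X k ` H n \<subseteq> N (Suc n)" for n using HP[of n] unfolding PK_def by blast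
    have HX': "X j ` H n \<subseteq> H (Suc n)" if j: "j < Suc k" for n j
    proof (cases "j = k")
      case True
      then show ?thesis using XkH[of n] HN[of "Suc n"] by blast
    next
      case False then show ?thesis using HX[of j n] j by simp
    qed
    have HH': "\<forall>n. submodule (H n) R M \<and> N n \<subseteq> H n \<and> H n \<subseteq> P n \<and> (\<forall>j<Suc k. X j ` H n \<subseteq> H (Suc n))"
      using Hsub HN HP PKP HX' by (meson subset_trans)
    obtain n0 where n0: "\<forall>n\<ge>n0. H (Suc n) \<subseteq> submod_span R M (N (Suc n) \<union> (\<Union>j<Suc k. X j ` H n))"
      using Suc.prems(2)[unfolded gfg_def, THEN spec[of _ H], THEN mp, OF HH'] by blast
    have "\<forall>n\<ge>n0. H (Suc n) \<subseteq> submod_span R M (N (Suc n) \<union> (\<Union>j<k. X j ` H n))"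
    proof (intro allI impI)
      fix n assume n: "n \<ge> n0"
      have "N (Suc n) \<union> (\<Union>j<Suc k. X j ` H n) \<subseteq> N (Suc n) \<union> (\<Union>j<k. X j ` H n)"
        using XkH[of n] unfolding lessThan_Suc by blast
      then have sp: "submod_span R M (N (Suc n) \<union> (\<Union>j<Suc k. X j ` H n)) \<subseteq> submod_span R M (N (Suc n) \<union> (\<Union>j<k. X j ` H n))"
        by (rule span_mono)
      have "H (Suc n) \<subseteq> submod_span R M (N (Suc n) \<union> (\<Union>j<Suc k. X j ` H n))" using n0 n by blast
      then show "H (Suc n) \<subseteq> submod_span R M (N (Suc n) \<union> (\<Union>j<k. X j ` H n))"
        using sp by (rule subset_trans)
    qed
    then show "\<exists>n0. \<forall>n\<ge>n0. H (Suc n) \<subseteq> submod_span R M (N (Suc n) \<union> (\<Union>j<k. X j ` H n))" by blast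
  qed

  have famC: "gfam R M k X P NC"
    unfolding gfam_def
  proof (intro conjI allI impI ballI)
    show "mod_hom R M M (X j)" if "j<k" for j using homs that by simp
    show "X i (X j x) = X j (X i x)" if "i<k" "j<k" "x \<in> carrier M" for i j x using comm that by simp
    fix n
    show "submodule (P n) R M" by (rule fam(1))
    show "submodule (NC n) R M" by (rule NCsub)
    show "NC n \<subseteq> P n" by (rule NCP)
    fix j assume j: "j < k"
    show "X j ` P n \<subseteq> P (Suc n)" using maps(1)[of j n] j by simp
    show "X j ` NC n \<subseteq> NC (Suc n)"
    proof (cases n)
      case 0
      then show ?thesis using maps(2)[of j 0] j NNC[of 1] by (auto simp: NC0)
    next
      case (Suc m)
      show ?thesis
      proof
        fix y assume "y \<in> X j ` NC n"
        then obtain a p where ap: "a \<in> N (Suc m)" "p \<in> P m" "y = X j (a \<oplus>\<^bsub>M\<^esub> X k p)"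
          using Suc by (auto simp: NCS setadd_mem)
        have ac: "a \<in> carrier M" using ap(1) fam(3) Pc by blast
        have xpc: "X k p \<in> carrier M" using maps(1)[of k m] ap(2) Pc by blast
        have "y = X j a \<oplus>\<^bsub>M\<^esub> X j (X k p)"
          using hom_props(2)[OF homs[of j] ac xpc] ap(3) j by simp
        also have "X j (X k p) = X k (X j p)" using comm[of j k p] j Pc[OF ap(2)] by simp
        finally have y: "y = X j a \<oplus>\<^bsub>M\<^esub> X k (X j p)" .
        have "X j a \<in> N (Suc (Suc m))" using maps(2)[of j "Suc m"] j ap(1) by auto
        moreover have "X j p \<in> P (Suc m)" using maps(1)[of j m] j ap(2) by auto
        ultimately show "y \<in> NC (Suc n)" using y Suc unfolding NCS setadd_mem by blast
      qed
    qed
  qed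

  have gC: "gfg R M k X P NC"
    unfolding gfg_def
  proof (intro allI impI)
    fix H assume HH: "\<forall>n. submodule (H n) R M \<and> NC n \<subseteq> H n \<and> H n \<subseteq> P n \<and> (\<forall>j<k. X j ` H n \<subseteq> H (Suc n))"
    have Hsub: "submodule (H n) R M" for n using HH by blast
    have HN: "NC n \<subseteq> H n" for n using HH by blast
    have HP: "H n \<subseteq> P n" for n using HH by blast
    have HX: "X j ` H n \<subseteq> H (Suc n)" if "j < k" for n j using HH that by blast
    have XkH: "X k ` H n \<subseteq> NC (Suc n)" for n using HP[of n] XPNC[of n] by blast
    have HX': "X j ` H n \<subseteq> H (Suc n)" if j: "j < Suc k" for n j
    proof (cases "j = k")
      case True
      then show ?thesis using XkH[of n] HN[of "Suc n"] by blast
    next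
      case False then show ?thesis using HX[of j n] j by simp
    qed
    have HH': "\<forall>n. submodule (H n) R M \<and> N n \<subseteq> H n \<and> H n \<subseteq> P n \<and> (\<forall>j<Suc k. X j ` H n \<subseteq> H (Suc n))"
      using Hsub HN NNC HP HX' by (meson subset_trans)
    obtain n0 where n0: "\<forall>n\<ge>n0. H (Suc n) \<subseteq> submod_span R M (N (Suc n) \<union> (\<Union>j<Suc k. X j ` H n))"
      using Suc.prems(2)[unfolded gfg_def, THEN spec[of _ H], THEN mp, OF HH'] by blast
    have "\<forall>n\<ge>n0. H (Suc n) \<subseteq> submod_span R M (NC (Suc n) \<union> (\<Union>j<k. X j ` H n))"
    proof (intro allI impI)
      fix n assume n: "n \<ge> n0"
      have "N (Suc n) \<union> (\<Union>j<Suc k. X j ` H n) \<subseteq> NC (Suc n) \<union> (\<Union>j<k. X j ` H n)"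
        using XkH[of n] NNC[of "Suc n"] unfolding lessThan_Suc by blast
      then have sp: "submod_span R M (N (Suc n) \<union> (\<Union>j<Suc k. X j ` H n)) \<subseteq> submod_span R M (NC (Suc n) \<union> (\<Union>j<k. X j ` H n))"
        by (rule span_mono)
      have "H (Suc n) \<subseteq> submod_span R M (N (Suc n) \<union> (\<Union>j<Suc k. X j ` H n))" using n0 n by blast
      then show "H (Suc n) \<subseteq> submod_span R M (NC (Suc n) \<union> (\<Union>j<k. X j ` H n))"
        using sp by (rule subset_trans)
    qed
    then show "\<exists>n0. \<forall>n\<ge>n0. H (Suc n) \<subseteq> submod_span R M (NC (Suc n) \<union> (\<Union>j<k. X j ` H n))" by blast
  qed

  obtain n0 where fin: "\<And>n. n \<ge> n0 \<Longrightarrow> lam (Qt M (P n) (N n)) < \<infinity>" using Suc.prems(3) by blast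
  have S1n: "lam (Qt M (P n) (N n)) = lam (Qt M (PK n) (N n)) + lam (Qt M (NC (Suc n)) (N (Suc n)))" for n
    using lam_S1[OF lf xh fam(1)[of n] fam(2)[of n] fam(2)[of "Suc n"] fam(3)[of n] maps(2)[of k n]]
    by (simp add: PK_def NCS)
  have S2n: "lam (Qt M (P (Suc n)) (N (Suc n))) = lam (Qt M (NC (Suc n)) (N (Suc n))) + lam (Qt M (P (Suc n)) (NC (Suc n)))" for n
    by (rule lam_S2[OF lf fam(1) fam(2) NCsub NNC NCP])
  have finK: "\<exists>n0. \<forall>n\<ge>n0. lam (Qt M (PK n) (N n)) < \<infinity>"
  proof (intro exI[of _ n0] allI impI)
    fix n assume "n \<ge> n0"
    then have "lam (Qt M (PK n) (N n)) + lam (Qt M (NC (Suc n)) (N (Suc n))) < \<infinity>" using fin[of n] S1n[of n] by simp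
    then show "lam (Qt M (PK n) (N n)) < \<infinity>" by simp
  qed
  have finC: "\<exists>n0. \<forall>n\<ge>n0. lam (Qt M (P n) (NC n)) < \<infinity>"
  proof (intro exI[of _ "Suc n0"] allI impI)
    fix n assume n: "n \<ge> Suc n0"
    then obtain m where m: "n = Suc m" "m \<ge> n0" by (cases n) auto
    have "lam (Qt M (P (Suc m)) (N (Suc m))) < \<infinity>" using fin m by simp
    then show "lam (Qt M (P n) (NC n)) < \<infinity>" using S2n[of m] m by simp
  qed
  obtain qk Nk where qk: "qk = 0 \<or> degree qk < k"
    and Nk: "\<And>n. n \<ge> Nk \<Longrightarrow> lam (Qt M (PK n) (N n)) = ennreal (poly qk (real n)) \<and> poly qk (real n) \<ge> 0"
    using Suc.IH[OF famK gK finK] by blast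
  obtain qc Nc where qc: "qc = 0 \<or> degree qc < k"
    and Nc: "\<And>n. n \<ge> Nc \<Longrightarrow> lam (Qt M (P n) (NC n)) = ennreal (poly qc (real n)) \<and> poly qc (real n) \<ge> 0"
    using Suc.IH[OF famC gC finC] by blast
  define n1 where "n1 = max n0 (max Nk Nc)"
  define a where "a n = enn2real (lam (Qt M (P n) (N n)))" for n
  define D where "D = pcompose qc [:1,1:] - qk"
  have diff: "\<forall>n\<ge>n1. a (Suc n) - a n = poly D (real n)"
  proof (intro allI impI)
    fix n assume n: "n \<ge> n1"
    have fA: "lam (Qt M (P n) (N n)) < \<infinity>" "lam (Qt M (P (Suc n)) (N (Suc n))) < \<infinity>"
      using fin n by (auto simp: n1_def)
    have fK: "lam (Qt M (PK n) (N n)) < \<infinity>" and fB: "lam (Qt M (NC (Suc n)) (N (Suc n))) < \<infinity>"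
      using fA(1) S1n[of n] by simp_all
    have fC: "lam (Qt M (P (Suc n)) (NC (Suc n))) < \<infinity>"
      using fA(2) S2n[of n] by simp
    have an: "a n = enn2real (lam (Qt M (PK n) (N n))) + enn2real (lam (Qt M (NC (Suc n)) (N (Suc n))))"
      unfolding a_def S1n[of n] by (rule e2r_add[OF fK fB])
    have aSn: "a (Suc n) = enn2real (lam (Qt M (NC (Suc n)) (N (Suc n)))) + enn2real (lam (Qt M (P (Suc n)) (NC (Suc n))))"
      unfolding a_def S2n[of n] by (rule e2r_add[OF fB fC])
    have k1: "enn2real (lam (Qt M (PK n) (N n))) = poly qk (real n)"
      using Nk[of n] n by (simp add: n1_def)
    have c1: "enn2real (lam (Qt M (P (Suc n)) (NC (Suc n)))) = poly qc (real (Suc n))"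
      using Nc[of "Suc n"] n by (simp add: n1_def)
    have "a (Suc n) - a n = poly qc (real (Suc n)) - poly qk (real n)"
      using an aSn k1 c1 by simp
    also have "\<dots> = poly D (real n)" by (simp add: D_def poly_pcompose add.commute)
    finally show "a (Suc n) - a n = poly D (real n)" .
  qed
  have degD: "D = 0 \<or> degree D < k"
  proof (cases "k = 0")
    case True
    then have "qc = 0" "qk = 0" using qc qk by auto
    then show ?thesis by (simp add: D_def)
  next
    case False
    have dc: "degree (pcompose qc [:1,1:]) = degree qc" by (simp add: degree_pcompose)
    have "degree qc < k" "degree qk < k" using qc qk False by auto
    then have "degree D < k" unfolding D_def using dc degree_diff_le_max[of "pcompose qc [:1,1:]" qk]
      by linarith
    then show ?thesis by simp
  qed
  obtain q where q: "degree q < Suc k" and qa: "\<forall>n\<ge>n1. a n = poly q (real n)"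
    using poly_from_diff[OF diff degD] by blast
  have "\<forall>n\<ge>n1. lam (Qt M (P n) (N n)) = ennreal (poly q (real n)) \<and> poly q (real n) \<ge> 0"
  proof (intro allI impI conjI)
    fix n assume n: "n \<ge> n1"
    have fA: "lam (Qt M (P n) (N n)) < \<infinity>" using fin n by (auto simp: n1_def)
    have "lam (Qt M (P n) (N n)) = ennreal (a n)" unfolding a_def using fA by simp
    then show "lam (Qt M (P n) (N n)) = ennreal (poly q (real n))" using qa n by simp
    have "a n \<ge> 0" unfolding a_def by (rule enn2real_nonneg)
    then show "poly q (real n) \<ge> 0" using qa n by simp
  qed
  then show ?case using q by blast
qed

end


lemma gr_piece_Qt: "gr_piece A Af i = Qt A (Af (Suc i)) (Af i)"
  by (simp add: gr_piece_def Qt_def)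

lemma ag_carrier: "b \<in> carrier (assoc_graded A Af) \<longleftrightarrow>
   (\<forall>i. b i \<in> (\<lambda>a. Af i +>\<^bsub>A\<^esub> a) ` Af (Suc i)) \<and> finite {i. b i \<noteq> Af i}"
  by (simp add: assoc_graded_def gr_piece_Qt carrier_Qt)

lemma ag_zero: "\<zero>\<^bsub>assoc_graded A Af\<^esub> = Af"
  by (simp add: assoc_graded_def)

lemma ag_add: "(b \<oplus>\<^bsub>assoc_graded A Af\<^esub> c) i = b i <+>\<^bsub>A\<^esub> c i"
  by (simp add: assoc_graded_def)

lemma ag_smult: "(r \<odot>\<^bsub>assoc_graded A Af\<^esub> b) i = Af i <+>\<^bsub>A\<^esub> ((\<lambda>x. r \<odot>\<^bsub>A\<^esub> x) ` b i)"
  by (simp add: assoc_graded_def gr_piece_Qt smult_Qt)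

lemma modl_intro: "module R M \<Longrightarrow> modl R M"
  by (simp add: modl_def)

context modl begin

lemma span_submodule:
  assumes S: "S \<subseteq> carrier M"
  shows "submodule (submod_span R M S) R M"
proof (rule submodule_sm)
  have cs: "submodule (carrier M) R M" by (rule carrier_is_submodule)
  show "submod_span R M S \<subseteq> carrier M" by (rule span_le[OF S cs])
  show "\<zero>\<^bsub>M\<^esub> \<in> submod_span R M S" unfolding submod_span_def using sub_props(2) by blast
  show "a \<oplus>\<^bsub>M\<^esub> b \<in> submod_span R M S" if "a \<in> submod_span R M S" "b \<in> submod_span R M S" for a b
    using that sub_props(3) unfolding submod_span_def by blast
  show "r \<odot>\<^bsub>M\<^esub> a \<in> submod_span R M S" if "r \<in> carrier R" "a \<in> submod_span R M S" for r a
    using that sub_props(4) unfolding submod_span_def by blast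
qed

lemma sub_inter:
  assumes "submodule H1 R M" "submodule H2 R M"
  shows "submodule (H1 \<inter> H2) R M"
  by (rule submodule_sm) (use sub_props[OF assms(1)] sub_props[OF assms(2)] in auto)

end

lemma levelsub:
  fixes R :: "'r ring" and A :: "('r,'a) module"
  assumes mA: "module R A" and mG: "module R (assoc_graded A Af)"
    and Af: "\<And>i. submodule (Af i) R A"
    and W: "\<And>i. submodule (W i) R A" "\<And>i. Af i \<subseteq> W i"
  shows "submodule {b \<in> carrier (assoc_graded A Af). \<forall>i. b i \<subseteq> W i} R (assoc_graded A Af)"
proof -
  interpret G: modl R "assoc_graded A Af" by (rule modl_intro[OF mG])
  interpret A: modl R A by (rule modl_intro[OF mA])
  show ?thesis
  proof (rule G.submodule_sm)
    show "{b \<in> carrier (assoc_graded A Af). \<forall>i. b i \<subseteq> W i} \<subseteq> carrier (assoc_graded A Af)" by blast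
    show "\<zero>\<^bsub>assoc_graded A Af\<^esub> \<in> {b \<in> carrier (assoc_graded A Af). \<forall>i. b i \<subseteq> W i}"
      using G.M.zero_closed W(2) by (simp add: ag_zero)
  next
    fix b c assume b: "b \<in> {b \<in> carrier (assoc_graded A Af). \<forall>i. b i \<subseteq> W i}"
      and c: "c \<in> {b \<in> carrier (assoc_graded A Af). \<forall>i. b i \<subseteq> W i}"
    have "(b \<oplus>\<^bsub>assoc_graded A Af\<^esub> c) i \<subseteq> W i" for i
    proof
      fix x assume "x \<in> (b \<oplus>\<^bsub>assoc_graded A Af\<^esub> c) i"
      then obtain y z where "y \<in> b i" "z \<in> c i" "x = y \<oplus>\<^bsub>A\<^esub> z" by (auto simp: ag_add A.setadd_mem)
      then show "x \<in> W i" using b c A.sub_props(3)[OF W(1)[of i]] by blast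
    qed
    then show "b \<oplus>\<^bsub>assoc_graded A Af\<^esub> c \<in> {b \<in> carrier (assoc_graded A Af). \<forall>i. b i \<subseteq> W i}"
      using b c G.M.a_closed by blast
  next
    fix r b assume r: "r \<in> carrier R" and b: "b \<in> {b \<in> carrier (assoc_graded A Af). \<forall>i. b i \<subseteq> W i}"
    have "(r \<odot>\<^bsub>assoc_graded A Af\<^esub> b) i \<subseteq> W i" for i
    proof
      fix x assume "x \<in> (r \<odot>\<^bsub>assoc_graded A Af\<^esub> b) i"
      then obtain y z where yz: "y \<in> Af i" "z \<in> b i" "x = y \<oplus>\<^bsub>A\<^esub> r \<odot>\<^bsub>A\<^esub> z" by (auto simp: ag_smult A.setadd_mem)
      have "z \<in> W i" using b yz by blast
      then have "r \<odot>\<^bsub>A\<^esub> z \<in> W i" using r A.sub_props(4)[OF W(1)[of i]] by blast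
      moreover have "y \<in> W i" using yz W(2) by blast
      ultimately show "x \<in> W i" using yz A.sub_props(3)[OF W(1)[of i]] by blast
    qed
    then show "r \<odot>\<^bsub>assoc_graded A Af\<^esub> b \<in> {b \<in> carrier (assoc_graded A Af). \<forall>i. b i \<subseteq> W i}"
      using b r G.smult_closed by blast
  qed
qed

lemma levelsub_X:
  fixes R :: "'r ring" and A :: "('r,'a) module"
  assumes hom: "mod_hom R (assoc_graded A Af) (assoc_graded A Af) (assoc_graded_X A Af X j)"
    and mA: "module R A"
    and W: "\<And>i. submodule (W i) R A" "\<And>i. Af i \<subseteq> W i"
    and XW: "\<And>i. X j ` W i \<subseteq> W (Suc i)"
    and b: "b \<in> {b \<in> carrier (assoc_graded A Af). \<forall>i. b i \<subseteq> W i}"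
  shows "assoc_graded_X A Af X j b \<in> {b \<in> carrier (assoc_graded A Af). \<forall>i. b i \<subseteq> W i}"
proof -
  interpret A: modl R A by (rule modl_intro[OF mA])
  have "assoc_graded_X A Af X j b \<in> carrier (assoc_graded A Af)" using hom b by (auto simp: mod_hom_def)
  moreover have "assoc_graded_X A Af X j b i \<subseteq> W i" for i
  proof (cases i)
    case 0 then show ?thesis using W(2) by (simp add: assoc_graded_X_def)
  next
    case (Suc m)
    show ?thesis
    proof
      fix x assume "x \<in> assoc_graded_X A Af X j b i"
      then obtain y z where yz: "y \<in> Af (Suc m)" "z \<in> b m" "x = y \<oplus>\<^bsub>A\<^esub> X j z"
        using Suc by (auto simp: assoc_graded_X_def A.setadd_mem)
      have "X j z \<in> W (Suc m)" using yz b XW[of m] by blast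
      moreover have "y \<in> W (Suc m)" using yz W(2) by blast
      ultimately show "x \<in> W i" using yz Suc A.sub_props(3)[OF W(1)] by blast
    qed
  qed
  ultimately show ?thesis by blast
qed


lemma graded_gfg:
  fixes R :: "'r ring" and A :: "('r,'a) module"
  assumes mA: "module R A" and filt: "filtration R A k X Af"
    and noeth: "noetherian_smodule R (assoc_graded A Af) k (assoc_graded_X A Af X)"
  shows "gfg R A k X (\<lambda>n. Af (Suc n)) Af"
  unfolding gfg_def
proof (intro allI impI)
  fix H assume HH: "\<forall>n. submodule (H n) R A \<and> Af n \<subseteq> H n \<and> H n \<subseteq> Af (Suc n) \<and> (\<forall>j<k. X j ` H n \<subseteq> H (Suc n))"
  interpret A: modl R A by (rule modl_intro[OF mA])
  have Hsub: "submodule (H n) R A" for n using HH by blast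
  have HN: "Af n \<subseteq> H n" for n using HH by blast
  have HP: "H n \<subseteq> Af (Suc n)" for n using HH by blast
  have HX: "X j ` H n \<subseteq> H (Suc n)" if "j < k" for n j using HH that by blast
  have Afsub: "submodule (Af i) R A" for i using filt by (simp add: filtration_def)
  have mG: "module R (assoc_graded A Af)" using noeth by (simp add: noetherian_smodule_def smodule_def)
  have homG: "mod_hom R (assoc_graded A Af) (assoc_graded A Af) (assoc_graded_X A Af X j)" if "j < k" for j
    using noeth that by (simp add: noetherian_smodule_def smodule_def)
  have noe: "\<exists>F. finite F \<and> F \<subseteq> S \<and> S = s_span R (assoc_graded A Af) k (assoc_graded_X A Af X) F"
    if "s_submodule R (assoc_graded A Af) k (assoc_graded_X A Af X) S" for S
    using noeth that unfolding noetherian_smodule_def by blast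
  have Hc: "H n \<subseteq> carrier A" for n using A.sub_props(1)[OF Hsub] by blast
  define H' where "H' = {b \<in> carrier (assoc_graded A Af). \<forall>i. b i \<subseteq> H i}"
  have sH': "s_submodule R (assoc_graded A Af) k (assoc_graded_X A Af X) H'"
    unfolding s_submodule_def
  proof (intro conjI allI impI)
    show "submodule H' R (assoc_graded A Af)" unfolding H'_def by (rule levelsub[OF mA mG Afsub Hsub HN])
    fix j assume j: "j < k"
    show "assoc_graded_X A Af X j ` H' \<subseteq> H'"
      unfolding H'_def using levelsub_X[OF homG[OF j] mA Hsub HN HX[OF j]] by blast
  qed
  obtain F where F: "finite F" "F \<subseteq> H'" "H' = s_span R (assoc_graded A Af) k (assoc_graded_X A Af X) F"
    using noe[OF sH'] by blast
  have finU: "finite (\<Union>f\<in>F. {i. f i \<noteq> Af i})"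
  proof (rule finite_UN_I[OF F(1)])
    fix f assume "f \<in> F"
    then have "f \<in> carrier (assoc_graded A Af)" using F(2) unfolding H'_def by blast
    then show "finite {i. f i \<noteq> Af i}" unfolding ag_carrier by (elim conjE)
  qed
  obtain n0 where n0U: "(\<Union>f\<in>F. {i. f i \<noteq> Af i}) \<subseteq> {..<n0}"
    using finite_nat_bounded[OF finU] by blast
  have n0: "f i = Af i" if f: "f \<in> F" and i: "i \<ge> n0" for f i
  proof (rule ccontr)
    assume "f i \<noteq> Af i"
    then have "i \<in> (\<Union>f\<in>F. {i. f i \<noteq> Af i})" using f by blast
    then have "i < n0" using n0U by blast
    then show False using i by simp
  qed
  define W' where "W' i = (case i of 0 \<Rightarrow> carrier A | Suc m \<Rightarrow>
     if m \<ge> n0 then submod_span R A (Af (Suc m) \<union> (\<Union>j<k. X j ` H m)) else carrier A)" for i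
  define W where "W i = H i \<inter> W' i" for i
  have spanS: "Af (Suc m) \<union> (\<Union>j<k. X j ` H m) \<subseteq> carrier A" for m
    using A.sub_props(1)[OF Afsub[of "Suc m"]] HX Hc by blast
  have W'sub: "submodule (W' i) R A" for i
    by (cases i) (simp_all add: W'_def A.carrier_is_submodule A.span_submodule[OF spanS])
  have AfW': "Af i \<subseteq> W' i" for i
  proof (cases i)
    case 0 then show ?thesis using A.sub_props(1)[OF Afsub] by (simp add: W'_def)
  next
    case (Suc m)
    have "Af (Suc m) \<subseteq> submod_span R A (Af (Suc m) \<union> (\<Union>j<k. X j ` H m))"
      using span_sup[of "Af (Suc m) \<union> (\<Union>j<k. X j ` H m)" R A] by blast
    then show ?thesis using Suc A.sub_props(1)[OF Afsub] by (simp add: W'_def)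
  qed
  have Wsub: "submodule (W i) R A" for i unfolding W_def by (rule A.sub_inter[OF Hsub W'sub])
  have AfW: "Af i \<subseteq> W i" for i unfolding W_def using HN AfW' by blast
  have XW: "X j ` W i \<subseteq> W (Suc i)" if j: "j < k" for i j
  proof -
    have "X j ` W i \<subseteq> X j ` H i" unfolding W_def by blast
    moreover have "X j ` H i \<subseteq> H (Suc i)" using HX[OF j] .
    moreover have "X j ` H i \<subseteq> W' (Suc i)"
    proof (cases "i \<ge> n0")
      case True
      have "X j ` H i \<subseteq> Af (Suc i) \<union> (\<Union>j<k. X j ` H i)" using j by blast
      then have "X j ` H i \<subseteq> submod_span R A (Af (Suc i) \<union> (\<Union>j<k. X j ` H i))"
        using span_sup[of "Af (Suc i) \<union> (\<Union>j<k. X j ` H i)" R A] by blast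
      then show ?thesis using True by (simp add: W'_def)
    next
      case False
      have "X j ` H i \<subseteq> carrier A" using HX[OF j, of i] Hc[of "Suc i"] by (rule subset_trans)
      then show ?thesis using False by (simp add: W'_def)
    qed
    ultimately show ?thesis unfolding W_def by blast
  qed
  define T where "T = {b \<in> carrier (assoc_graded A Af). \<forall>i. b i \<subseteq> W i}"
  have sT: "s_submodule R (assoc_graded A Af) k (assoc_graded_X A Af X) T"
    unfolding s_submodule_def
  proof (intro conjI allI impI)
    show "submodule T R (assoc_graded A Af)" unfolding T_def by (rule levelsub[OF mA mG Afsub Wsub AfW])
    fix j assume j: "j < k"
    show "assoc_graded_X A Af X j ` T \<subseteq> T"
      unfolding T_def using levelsub_X[OF homG[OF j] mA Wsub AfW XW[OF j]] by blast
  qed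
  have FT: "F \<subseteq> T"
  proof
    fix f assume f: "f \<in> F"
    then have fc: "f \<in> carrier (assoc_graded A Af)" and fH: "\<And>i. f i \<subseteq> H i" using F(2) by (auto simp: H'_def)
    have "f i \<subseteq> W' i" for i
    proof (cases "\<exists>m. i = Suc m \<and> m \<ge> n0")
      case True
      then have "f i = Af i" using n0[OF f, of i] by auto
      then show ?thesis using AfW' by simp
    next
      case False
      then have "W' i = carrier A" by (cases i) (auto simp: W'_def)
      then show ?thesis using fH[of i] Hc[of i] by simp
    qed
    then show "f \<in> T" unfolding T_def W_def using fc fH by blast
  qed
  have H'T: "H' \<subseteq> T" unfolding F(3) s_span_def using sT FT by blast
  show "\<exists>n0. \<forall>n\<ge>n0. H (Suc n) \<subseteq> submod_span R A (Af (Suc n) \<union> (\<Union>j<k. X j ` H n))"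
  proof (intro exI[of _ n0] allI impI subsetI)
    fix n h assume n: "n \<ge> n0" and h: "h \<in> H (Suc n)"
    define e where "e = Af(Suc n := Af (Suc n) +>\<^bsub>A\<^esub> h)"
    have hA: "h \<in> Af (Suc (Suc n))" using h HP by blast
    have hc: "h \<in> carrier A" using h Hc by blast
    have eC: "e \<in> carrier (assoc_graded A Af)"
      unfolding ag_carrier
    proof (intro conjI allI)
      fix i
      show "e i \<in> (+>\<^bsub>A\<^esub>) (Af i) ` Af (Suc i)"
      proof (cases "i = Suc n")
        case True then show ?thesis using hA by (simp add: e_def)
      next
        case False
        have "Af i = Af i +>\<^bsub>A\<^esub> \<zero>\<^bsub>A\<^esub>" using A.coset_zero[OF Afsub] by simp
        moreover have "\<zero>\<^bsub>A\<^esub> \<in> Af (Suc i)" using A.sub_props(2)[OF Afsub] by blast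
        ultimately show ?thesis using False by (simp add: e_def)
      qed
    next
      have "{i. e i \<noteq> Af i} \<subseteq> {Suc n}" by (auto simp: e_def)
      then show "finite {i. e i \<noteq> Af i}" by (rule finite_subset) simp
    qed
    have "e i \<subseteq> H i" for i
    proof (cases "i = Suc n")
      case True
      show ?thesis
      proof
        fix x assume "x \<in> e i"
        then obtain y where "y \<in> Af (Suc n)" "x = y \<oplus>\<^bsub>A\<^esub> h" using True by (auto simp: e_def A.coset_mem)
        then show "x \<in> H i" using True HN h A.sub_props(3)[OF Hsub] by blast
      qed
    next
      case False then show ?thesis using HN by (simp add: e_def)
    qed
    then have "e \<in> H'" using eC by (simp add: H'_def)
    then have "e \<in> T" using H'T by blast
    then have "e (Suc n) \<subseteq> W' (Suc n)" by (auto simp: T_def W_def)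
    then have sub: "Af (Suc n) +>\<^bsub>A\<^esub> h \<subseteq> submod_span R A (Af (Suc n) \<union> (\<Union>j<k. X j ` H n))"
      using n by (simp add: e_def W'_def)
    have "\<zero>\<^bsub>A\<^esub> \<oplus>\<^bsub>A\<^esub> h \<in> Af (Suc n) +>\<^bsub>A\<^esub> h" using A.sub_props(2)[OF Afsub] by (auto simp: A.coset_mem)
    then have "h \<in> Af (Suc n) +>\<^bsub>A\<^esub> h" using hc by simp
    then show "h \<in> submod_span R A (Af (Suc n) \<union> (\<Union>j<k. X j ` H n))" using sub by blast
  qed
qed

theorem proposition11p2:
  fixes R :: "'r ring" and A :: "('r,'c) module" and k :: nat
    and X :: "nat \<Rightarrow> 'c \<Rightarrow> 'c" and Af :: "nat \<Rightarrow> 'c set"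
    and lam :: "('r, 'c set) module \<Rightarrow> ennreal"
  assumes "cring R" and "noetherian_ring R"
    and "length_function R lam"
    and "smodule R A k X"
    and "lambda_inert R lam A k X Af"
  shows "\<exists>q :: real poly. (q = 0 \<or> degree q < k) \<and>
           (\<exists>N. \<forall>n\<ge>N. poly q (real n) \<ge> 0 \<and> lam (gr_piece A Af n) = ennreal (poly q (real n)))"
proof -
  have mA: "module R A" using assms(4) by (simp add: smodule_def)
  interpret A: modl R A by (rule modl_intro[OF mA])
  have filt: "filtration R A k X Af" and noeth: "noetherian_smodule R (assoc_graded A Af) k (assoc_graded_X A Af X)"
    and fin: "\<exists>n0. \<forall>n\<ge>n0. lam (gr_piece A Af n) < \<infinity>"
    using assms(5) by (simp_all add: lambda_inert_def)
  have fam: "gfam R A k X (\<lambda>n. Af (Suc n)) Af"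
    using assms(4) filt unfolding gfam_def smodule_def filtration_def by auto
  have gfg: "gfg R A k X (\<lambda>n. Af (Suc n)) Af" by (rule graded_gfg[OF mA filt noeth])
  have fin': "\<exists>n0. \<forall>n\<ge>n0. lam (Qt A (Af (Suc n)) (Af n)) < \<infinity>" using fin by (simp add: gr_piece_Qt)
  obtain q where q: "q = 0 \<or> degree q < k"
    and N0: "\<exists>N0. \<forall>n\<ge>N0. lam (Qt A (Af (Suc n)) (Af n)) = ennreal (poly q (real n)) \<and> poly q (real n) \<ge> 0"
    using A.hilbert[OF assms(3) fam gfg fin'] by blast
  show ?thesis using q N0 by (auto simp: gr_piece_Qt)
qed


end
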